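(* Let $X$ be a Fréchet space. A multifunction $\Gamma:[0,1]\to ck(X)$ is integrable if and only if it is p-integrable. In that case, for every Lebesgue measurable $E\subseteq[0,1]$ the two integrals of $\Gamma$ over $E$ coincide.
   Context: $X$ is a Fréchet space whose topology is generated by an increasing sufficient sequence of seminorms $(p_i)_{i\in\mathbb N}$. $ck(X)$ is the family of nonempty compact convex subsets of $X$. For sets $A,B$, $H_i(A,B)=\max(e_i(A,B),e_i(B,A))$, $e_i(A,B)=\sup_{a\in A}\inf_{b\in B}p_i(a-b)$. $\mu$ is Lebesgue measure, $\mathcal L$ the Lebesgue measurable sets of $[0,1]$. Minkowski addition $A\oplus B=\overline{\{a+b\}}$. A simple multifunction is $\Gamma=\sum_{j=1}^p\chi_{A_j}C_j$ ($A_j\in\mathcal L$ pairwise disjoint, $C_j$ closed bounded convex) and $\int_E\Gamma\,dt:=\sum_j\mu(A_j\cap E)C_j$. Totally measurable: there are simple $\Gamma_n$ with $H_i(\Gamma_n(t),\Gamma(t))\to0$ a.e. for every $i$. Measurable by seminorm: for each $i$ there are simple $\Gamma_n^i$ with $H_i(\Gamma_n^i(t),\Gamma(t))\to0$ a.e. Integrable: $\Gamma$ is totally measurable and there exist simple $\Gamma_n:[0,1]\to ck(X)$ with $H_i(\Gamma_n(t),\Gamma(t))\to0$ a.e. for each $i$ and $\lim_{n,m\to\infty}\int_0^1H_i(\Gamma_n(t),\Gamma_m(t))dt=0$ for each $i$; then for each $E\in\mathcal L$ there is $x_E\in ck(X)$ with $\lim_nH_i(\int_E\Gamma_n dt,x_E)=0$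 for each $i$, and $x_E=\int_E\Gamma\,dt$. p-integrable: $\Gamma$ is measurable by seminorm and for every $i$ there are simple $\Gamma_n^i:[0,1]\to ck(X)$ such that $H_i(\Gamma_n^i(\cdot),\Gamma(\cdot))\in L^1([0,1])$, $H_i(\Gamma^i_n(\cdot),\Gamma(\cdot))\to0$ in measure, $\lim_n\int_EH_i(\Gamma_n^i(t),\Gamma(t))dt=0$ for each $E\in\mathcal L$, and there is a unique $x_E\in ck(X)$ with $\lim_nH_i(\int_E\Gamma_n^i dt,x_E)=0$; $x_E$ is the integral $\int_E\Gamma\,dt$. *)

theory Defs
  imports "HOL-Analysis.Analysis"
begin

definition is_seminorm :: "('a::real_vector \<Rightarrow> real) \<Rightarrow> bool" where
  "is_seminorm q \<longleftrightarrow> (\<forall>x. 0 \<le> q x) \<and> (\<forall>c x. q (c *\<^sub>R x) = \<bar>c\<bar> * q x)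
     \<and> (\<forall>x y. q (x + y) \<le> q x + q y)"

definition sn_conv :: "(nat \<Rightarrow> 'a::real_vector \<Rightarrow> real) \<Rightarrow> (nat \<Rightarrow> 'a) \<Rightarrow> 'a \<Rightarrow> bool" where
  "sn_conv p f x \<longleftrightarrow> (\<forall>i. (\<lambda>n. p i (f n - x)) \<longlonglongrightarrow> 0)"

definition sn_cauchy :: "(nat \<Rightarrow> 'a::real_vector \<Rightarrow> real) \<Rightarrow> (nat \<Rightarrow> 'a) \<Rightarrow> bool" where
  "sn_cauchy p f \<longleftrightarrow> (\<forall>i. \<forall>e>0. \<exists>N. \<forall>m\<ge>N. \<forall>n\<ge>N. p i (f m - f n) < e)"

definition frechet_seminorms :: "(nat \<Rightarrow> 'a::real_vector \<Rightarrow> real) \<Rightarrow> bool" where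
  "frechet_seminorms p \<longleftrightarrow> (\<forall>i. is_seminorm (p i))
     \<and> (\<forall>i x. p i x \<le> p (Suc i) x)
     \<and> (\<forall>x. (\<forall>i. p i x = 0) \<longrightarrow> x = 0)
     \<and> (\<forall>f. sn_cauchy p f \<longrightarrow> (\<exists>x. sn_conv p f x))"

text \<open>The topology is metrizable, so closure/compactness can be expressed by sequences.\<close>
definition sn_closure :: "(nat \<Rightarrow> 'a::real_vector \<Rightarrow> real) \<Rightarrow> 'a set \<Rightarrow> 'a set" where
  "sn_closure p S = {x. \<exists>f. (\<forall>n. f n \<in> S) \<and> sn_conv p f x}"

definition sn_closed :: "(nat \<Rightarrow> 'a::real_vector \<Rightarrow> real) \<Rightarrow> 'a set \<Rightarrow> bool" where
  "sn_closed p C \<longleftrightarrow> sn_closure p C \<subseteq> C"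

definition sn_bounded :: "(nat \<Rightarrow> 'a::real_vector \<Rightarrow> real) \<Rightarrow> 'a set \<Rightarrow> bool" where
  "sn_bounded p C \<longleftrightarrow> (\<forall>i. \<exists>M. \<forall>x\<in>C. p i x \<le> M)"

definition sn_compact :: "(nat \<Rightarrow> 'a::real_vector \<Rightarrow> real) \<Rightarrow> 'a set \<Rightarrow> bool" where
  "sn_compact p C \<longleftrightarrow> (\<forall>f. (\<forall>n. f n \<in> C) \<longrightarrow>
      (\<exists>(r::nat \<Rightarrow> nat) x. strict_mono r \<and> x \<in> C \<and> sn_conv p (f \<circ> r) x))"

definition ck :: "(nat \<Rightarrow> 'a::real_vector \<Rightarrow> real) \<Rightarrow> 'a set set" where
  "ck p = {C. C \<noteq> {} \<and> convex C \<and> sn_compact p C}"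

definition cbc :: "(nat \<Rightarrow> 'a::real_vector \<Rightarrow> real) \<Rightarrow> 'a set set" where
  "cbc p = {C. C \<noteq> {} \<and> convex C \<and> sn_closed p C \<and> sn_bounded p C}"

definition excess :: "(nat \<Rightarrow> 'a::real_vector \<Rightarrow> real) \<Rightarrow> nat \<Rightarrow> 'a set \<Rightarrow> 'a set \<Rightarrow> real" where
  "excess p i A B = (SUP a\<in>A. INF b\<in>B. p i (a - b))"

definition hausd :: "(nat \<Rightarrow> 'a::real_vector \<Rightarrow> real) \<Rightarrow> nat \<Rightarrow> 'a set \<Rightarrow> 'a set \<Rightarrow> real" where
  "hausd p i A B = max (excess p i A B) (excess p i B A)"

definition msum :: "(nat \<Rightarrow> 'a::real_vector \<Rightarrow> real) \<Rightarrow> 'a set \<Rightarrow> 'a set \<Rightarrow> 'a set" where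
  "msum p A B = sn_closure p {a + b | a b. a \<in> A \<and> b \<in> B}"

definition sscale :: "real \<Rightarrow> 'a::real_vector set \<Rightarrow> 'a set" where
  "sscale c A = (\<lambda>x. c *\<^sub>R x) ` A"

definition simple_rep :: "(nat \<Rightarrow> 'a::real_vector \<Rightarrow> real) \<Rightarrow> (real set \<times> 'a set) list \<Rightarrow> bool" where
  "simple_rep p L \<longleftrightarrow>
     (\<forall>j<length L. fst (L ! j) \<in> sets (lebesgue_on {0..1}) \<and> snd (L ! j) \<in> cbc p)
     \<and> (\<forall>j<length L. \<forall>k<length L. j \<noteq> k \<longrightarrow> fst (L ! j) \<inter> fst (L ! k) = {})"

definition simple_val :: "(nat \<Rightarrow> 'a::real_vector \<Rightarrow> real) \<Rightarrow> (real set \<times> 'a set) list \<Rightarrow> real \<Rightarrow> 'a set" where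
  "simple_val p L t = foldr (\<lambda>(A, C) S. msum p (sscale (indicator A t) C) S) L {0}"

definition simple_int :: "(nat \<Rightarrow> 'a::real_vector \<Rightarrow> real) \<Rightarrow> (real set \<times> 'a set) list \<Rightarrow> real set \<Rightarrow> 'a set" where
  "simple_int p L E = foldr (\<lambda>(A, C) S. msum p (sscale (measure lebesgue (A \<inter> E)) C) S) L {0}"

definition totally_measurable :: "(nat \<Rightarrow> 'a::real_vector \<Rightarrow> real) \<Rightarrow> (real \<Rightarrow> 'a set) \<Rightarrow> bool" where
  "totally_measurable p \<Gamma> \<longleftrightarrow> (\<exists>L. (\<forall>n. simple_rep p (L n)) \<and>
     (\<forall>i. AE t in lebesgue_on {0..1}. (\<lambda>n. hausd p i (simple_val p (L n) t) (\<Gamma> t)) \<longlonglongrightarrow> 0))"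

definition measurable_by_seminorm :: "(nat \<Rightarrow> 'a::real_vector \<Rightarrow> real) \<Rightarrow> (real \<Rightarrow> 'a set) \<Rightarrow> bool" where
  "measurable_by_seminorm p \<Gamma> \<longleftrightarrow> (\<forall>i. \<exists>L. (\<forall>n. simple_rep p (L n)) \<and>
     (AE t in lebesgue_on {0..1}. (\<lambda>n. hausd p i (simple_val p (L n) t) (\<Gamma> t)) \<longlonglongrightarrow> 0))"

definition int_seq :: "(nat \<Rightarrow> 'a::real_vector \<Rightarrow> real) \<Rightarrow> (real \<Rightarrow> 'a set) \<Rightarrow> (nat \<Rightarrow> (real set \<times> 'a set) list) \<Rightarrow> bool" where
  "int_seq p \<Gamma> L \<longleftrightarrow> totally_measurable p \<Gamma>
     \<and> (\<forall>n. simple_rep p (L n) \<and> (\<forall>t\<in>{0..1}. simple_val p (L n) t \<in> ck p))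
     \<and> (\<forall>i. AE t in lebesgue_on {0..1}. (\<lambda>n. hausd p i (simple_val p (L n) t) (\<Gamma> t)) \<longlonglongrightarrow> 0)
     \<and> (\<forall>i. \<forall>e>0. \<exists>N. \<forall>m\<ge>N. \<forall>n\<ge>N.
           integral\<^sup>L (lebesgue_on {0..1}) (\<lambda>t. hausd p i (simple_val p (L n) t) (simple_val p (L m) t)) < e)"

definition integrable_mf :: "(nat \<Rightarrow> 'a::real_vector \<Rightarrow> real) \<Rightarrow> (real \<Rightarrow> 'a set) \<Rightarrow> bool" where
  "integrable_mf p \<Gamma> \<longleftrightarrow> (\<exists>L. int_seq p \<Gamma> L \<and>
     (\<forall>E\<in>sets (lebesgue_on {0..1}). \<exists>x\<in>ck p.
        \<forall>i. (\<lambda>n. hausd p i (simple_int p (L n) E) x) \<longlonglongrightarrow> 0))"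

definition integral_mf_is :: "(nat \<Rightarrow> 'a::real_vector \<Rightarrow> real) \<Rightarrow> (real \<Rightarrow> 'a set)
    \<Rightarrow> (nat \<Rightarrow> (real set \<times> 'a set) list) \<Rightarrow> (real set \<Rightarrow> 'a set) \<Rightarrow> bool" where
  "integral_mf_is p \<Gamma> L I \<longleftrightarrow> int_seq p \<Gamma> L \<and>
     (\<forall>E\<in>sets (lebesgue_on {0..1}). I E \<in> ck p \<and>
        (\<forall>i. (\<lambda>n. hausd p i (simple_int p (L n) E) (I E)) \<longlonglongrightarrow> 0))"

definition p_int_seq :: "(nat \<Rightarrow> 'a::real_vector \<Rightarrow> real) \<Rightarrow> (real \<Rightarrow> 'a set) \<Rightarrow> (nat \<Rightarrow> nat \<Rightarrow> (real set \<times> 'a set) list) \<Rightarrow> bool" where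
  "p_int_seq p \<Gamma> Ls \<longleftrightarrow> measurable_by_seminorm p \<Gamma> \<and>
     (\<forall>i. (\<forall>n. simple_rep p (Ls i n) \<and> (\<forall>t\<in>{0..1}. simple_val p (Ls i n) t \<in> ck p))
       \<and> (\<forall>n. integrable (lebesgue_on {0..1}) (\<lambda>t. hausd p i (simple_val p (Ls i n) t) (\<Gamma> t)))
       \<and> (\<forall>e>0. (\<lambda>n. measure lebesgue {t\<in>{0..1}. e \<le> hausd p i (simple_val p (Ls i n) t) (\<Gamma> t)}) \<longlonglongrightarrow> 0)
       \<and> (\<forall>E\<in>sets (lebesgue_on {0..1}).
            (\<lambda>n. (LINT t:E|lebesgue. hausd p i (simple_val p (Ls i n) t) (\<Gamma> t))) \<longlonglongrightarrow> 0))"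

definition p_integrable_mf :: "(nat \<Rightarrow> 'a::real_vector \<Rightarrow> real) \<Rightarrow> (real \<Rightarrow> 'a set) \<Rightarrow> bool" where
  "p_integrable_mf p \<Gamma> \<longleftrightarrow> (\<exists>Ls. p_int_seq p \<Gamma> Ls \<and>
     (\<forall>E\<in>sets (lebesgue_on {0..1}). \<exists>!x. x \<in> ck p \<and>
        (\<forall>i. (\<lambda>n. hausd p i (simple_int p (Ls i n) E) x) \<longlonglongrightarrow> 0)))"

definition p_integral_mf_is :: "(nat \<Rightarrow> 'a::real_vector \<Rightarrow> real) \<Rightarrow> (real \<Rightarrow> 'a set)
    \<Rightarrow> (nat \<Rightarrow> nat \<Rightarrow> (real set \<times> 'a set) list) \<Rightarrow> (real set \<Rightarrow> 'a set) \<Rightarrow> bool" where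
  "p_integral_mf_is p \<Gamma> Ls J \<longleftrightarrow> p_int_seq p \<Gamma> Ls \<and>
     (\<forall>E\<in>sets (lebesgue_on {0..1}). J E \<in> ck p \<and>
        (\<forall>i. (\<lambda>n. hausd p i (simple_int p (Ls i n) E) (J E)) \<longlonglongrightarrow> 0))"

end

theory Submission
  imports Defs
begin

section \<open>Seminorm basics\<close>

lemma sn_nonneg: "is_seminorm q \<Longrightarrow> 0 \<le> q x"
  by (simp add: is_seminorm_def)
lemma sn_scale: "is_seminorm q \<Longrightarrow> q (c *\<^sub>R x) = \<bar>c\<bar> * q x"
  by (simp add: is_seminorm_def)
lemma sn_add: "is_seminorm q \<Longrightarrow> q (x + y) \<le> q x + q y"
  by (simp add: is_seminorm_def)
lemma sn_zero: "is_seminorm q \<Longrightarrow> q 0 = 0"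
  using sn_scale[of q 0 0] by simp
lemma sn_minus: "is_seminorm q \<Longrightarrow> q (- x) = q x"
  using sn_scale[of q "-1" x] by simp
lemma sn_commute: "is_seminorm q \<Longrightarrow> q (x - y) = q (y - x)"
  using sn_minus[of q "x - y"] by simp
lemma sn_tri: "is_seminorm q \<Longrightarrow> q (x - z) \<le> q (x - y) + q (y - z)"
  using sn_add[of q "x - y" "y - z"] by simp
lemma sn_diff: "is_seminorm q \<Longrightarrow> q (x - y) \<le> q x + q y"
  using sn_add[of q x "- y"] sn_minus[of q y] by simp
lemma sn_rev: "is_seminorm q \<Longrightarrow> q x \<le> q y + q (x - y)"
  using sn_add[of q y "x - y"] by simp

section \<open>Excess and Hausdorff for a single seminorm\<close>

definition sbdd :: "('a::real_vector \<Rightarrow> real) \<Rightarrow> 'a set \<Rightarrow> bool" where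
  "sbdd q A \<longleftrightarrow> (\<exists>M. \<forall>x\<in>A. q x \<le> M)"

definition dd :: "('a::real_vector \<Rightarrow> real) \<Rightarrow> 'a \<Rightarrow> 'a set \<Rightarrow> real" where
  "dd q a B = (INF b\<in>B. q (a - b))"

definition exc :: "('a::real_vector \<Rightarrow> real) \<Rightarrow> 'a set \<Rightarrow> 'a set \<Rightarrow> real" where
  "exc q A B = (SUP a\<in>A. dd q a B)"

definition hdist :: "('a::real_vector \<Rightarrow> real) \<Rightarrow> 'a set \<Rightarrow> 'a set \<Rightarrow> real" where
  "hdist q A B = max (exc q A B) (exc q B A)"

lemma hausd_hd: "hausd p i A B = hdist (p i) A B"
  by (simp add: hausd_def hdist_def excess_def exc_def dd_def)

context
  fixes q :: "'a::real_vector \<Rightarrow> real"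
  assumes q: "is_seminorm q"
begin

lemma dd_lower: "b \<in> B \<Longrightarrow> dd q a B \<le> q (a - b)"
  unfolding dd_def by (rule cINF_lower) (auto intro: bdd_belowI[where m=0] sn_nonneg[OF q])

lemma dd_greatest: "B \<noteq> {} \<Longrightarrow> (\<And>b. b \<in> B \<Longrightarrow> r \<le> q (a - b)) \<Longrightarrow> r \<le> dd q a B"
  unfolding dd_def by (rule cINF_greatest) auto

lemma dd_nonneg: "B \<noteq> {} \<Longrightarrow> 0 \<le> dd q a B"
  by (rule dd_greatest) (auto simp: sn_nonneg[OF q])

lemma dd_approx:
  assumes "B \<noteq> {}" "e > 0" shows "\<exists>b\<in>B. q (a - b) < dd q a B + e"
proof (rule ccontr)
  assume "\<not> ?thesis"
  then have "dd q a B + e \<le> dd q a B"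
    by (intro dd_greatest) (use assms in auto)
  with assms show False by simp
qed

lemma dd_bound:
  assumes "b \<in> B" "\<forall>x\<in>B. q x \<le> M" shows "dd q a B \<le> q a + M"
  using dd_lower[OF assms(1), of a] sn_diff[OF q, of a b] assms by fastforce

lemma exc_upper:
  assumes "a \<in> A" "sbdd q A" "sbdd q B" "B \<noteq> {}"
  shows "dd q a B \<le> exc q A B"
proof -
  obtain MA where MA: "\<forall>x\<in>A. q x \<le> MA" using assms(2) by (auto simp: sbdd_def)
  obtain MB where MB: "\<forall>x\<in>B. q x \<le> MB" using assms(3) by (auto simp: sbdd_def)
  obtain b where b: "b \<in> B" using assms(4) by auto
  have "bdd_above ((\<lambda>a. dd q a B) ` A)"
  proof (rule bdd_aboveI[where M="MA + MB"])
    fix x assume "x \<in> (\<lambda>a. dd q a B) ` A"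
    then obtain a where a: "a \<in> A" "x = dd q a B" by auto
    show "x \<le> MA + MB" using dd_bound[OF b MB, of a] MA a by force
  qed
  then show ?thesis unfolding exc_def by (rule cSUP_upper[OF assms(1)])
qed

lemma exc_least:
  "A \<noteq> {} \<Longrightarrow> (\<And>a. a \<in> A \<Longrightarrow> dd q a B \<le> r) \<Longrightarrow> exc q A B \<le> r"
  unfolding exc_def by (rule cSUP_least) auto

lemma exc_nonneg:
  assumes "A \<noteq> {}" "B \<noteq> {}" "sbdd q A" "sbdd q B" shows "0 \<le> exc q A B"
proof -
  obtain a where "a \<in> A" using assms by auto
  then show ?thesis using dd_nonneg[OF assms(2), of a] exc_upper[OF \<open>a\<in>A\<close> assms(3,4,2)] by linarith
qed

lemma exc_approx:
  assumes "a \<in> A" "sbdd q A" "sbdd q B" "B \<noteq> {}" "e > 0"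
  shows "\<exists>b\<in>B. q (a - b) < exc q A B + e"
proof -
  obtain b where "b \<in> B" "q (a - b) < dd q a B + e" using dd_approx[OF assms(4,5), of a] by blast
  then show ?thesis using exc_upper[OF assms(1-4)] by (intro bexI[of _ b]) auto
qed

lemma exc_leI:
  assumes "A \<noteq> {}" "B \<noteq> {}"
    and "\<And>a e. a \<in> A \<Longrightarrow> e > 0 \<Longrightarrow> \<exists>b\<in>B. q (a - b) \<le> r + e"
  shows "exc q A B \<le> r"
proof (rule exc_least[OF assms(1)])
  fix a assume a: "a \<in> A"
  show "dd q a B \<le> r"
  proof (rule field_le_epsilon)
    fix e :: real assume "e > 0"
    then obtain b where "b \<in> B" "q (a - b) \<le> r + e" using assms(3)[OF a] by blast
    then show "dd q a B \<le> r + e" using dd_lower[of b B a] by linarith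
  qed
qed

lemma exc_self: "A \<noteq> {} \<Longrightarrow> exc q A A \<le> 0"
  by (rule exc_leI) (auto simp: sn_zero[OF q] intro!: bexI)

lemma exc_tri:
  assumes ne: "A \<noteq> {}" "B \<noteq> {}" "C \<noteq> {}" and bd: "sbdd q A" "sbdd q B" "sbdd q C"
  shows "exc q A C \<le> exc q A B + exc q B C"
proof (rule exc_leI[OF ne(1,3)])
  fix a e assume a: "a \<in> A" and e: "(e::real) > 0"
  obtain b where b: "b \<in> B" "q (a - b) < exc q A B + e/2"
    using exc_approx[OF a bd(1,2) ne(2), of "e/2"] e by auto
  obtain c where c: "c \<in> C" "q (b - c) < exc q B C + e/2"
    using exc_approx[OF b(1) bd(2,3) ne(3), of "e/2"] e by auto
  show "\<exists>c\<in>C. q (a - c) \<le> exc q A B + exc q B C + e"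
    using sn_tri[OF q, of a c b] b c by (intro bexI[OF _ c(1)]) linarith
qed

lemma hd_nonneg: "A \<noteq> {} \<Longrightarrow> B \<noteq> {} \<Longrightarrow> sbdd q A \<Longrightarrow> sbdd q B \<Longrightarrow> 0 \<le> hdist q A B"
  unfolding hdist_def using exc_nonneg by (meson max.coboundedI1)

lemma hd_sym: "hdist q A B = hdist q B A"
  by (simp add: hdist_def max.commute)

lemma hd_self: "A \<noteq> {} \<Longrightarrow> hdist q A A \<le> 0"
  by (simp add: hdist_def exc_self)

lemma hd_tri:
  assumes "A \<noteq> {}" "B \<noteq> {}" "C \<noteq> {}" "sbdd q A" "sbdd q B" "sbdd q C"
  shows "hdist q A C \<le> hdist q A B + hdist q B C"
  using exc_tri[OF assms] exc_tri[of C B A] assms unfolding hdist_def by auto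

lemma hd_leI:
  assumes "A \<noteq> {}" "B \<noteq> {}"
    and "\<And>a e. a \<in> A \<Longrightarrow> e > 0 \<Longrightarrow> \<exists>b\<in>B. q (a - b) \<le> r + e"
    and "\<And>b e. b \<in> B \<Longrightarrow> e > 0 \<Longrightarrow> \<exists>a\<in>A. q (b - a) \<le> r + e"
  shows "hdist q A B \<le> r"
  unfolding hdist_def using exc_leI[OF assms(1,2,3)] exc_leI[OF assms(2,1,4)] by auto

lemma hd_approx:
  assumes "a \<in> A" "sbdd q A" "sbdd q B" "B \<noteq> {}" "e > 0"
  shows "\<exists>b\<in>B. q (a - b) < hdist q A B + e"
  using exc_approx[OF assms] unfolding hdist_def by force

lemma hd_approx':
  assumes "b \<in> B" "sbdd q A" "sbdd q B" "A \<noteq> {}" "e > 0"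
  shows "\<exists>a\<in>A. q (b - a) < hdist q A B + e"
  using exc_approx[OF assms(1,3,2,4,5)] unfolding hdist_def by force

end


lemma sbdd_plus:
  assumes q: "is_seminorm q" and "sbdd q A" "sbdd q B" shows "sbdd q (A + B)"
proof -
  obtain M N where M: "\<forall>x\<in>A. q x \<le> M" and N: "\<forall>x\<in>B. q x \<le> N"
    using assms by (auto simp: sbdd_def)
  show ?thesis unfolding sbdd_def
  proof (intro exI[of _ "M + N"] ballI)
    fix x assume "x \<in> A + B"
    then obtain a b where "x = a + b" "a \<in> A" "b \<in> B" by (rule set_plus_elim)
    then show "q x \<le> M + N" using sn_add[OF q, of a b] M N by force
  qed
qed

lemma sbdd_sscale:
  assumes q: "is_seminorm q" and "sbdd q A" shows "sbdd q (sscale c A)"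
proof -
  obtain M where M: "\<forall>x\<in>A. q x \<le> M" using assms by (auto simp: sbdd_def)
  show ?thesis unfolding sbdd_def sscale_def
    by (intro exI[of _ "\<bar>c\<bar> * M"]) (auto simp: sn_scale[OF q] M intro!: mult_left_mono)
qed

lemma sbdd_zero: "is_seminorm q \<Longrightarrow> sbdd q {0}"
  by (auto simp: sbdd_def sn_zero)

lemma hdist_plus:
  assumes q: "is_seminorm q" and ne: "A \<noteq> {}" "B \<noteq> {}" "C \<noteq> {}" "D \<noteq> {}"
    and bd: "sbdd q A" "sbdd q B" "sbdd q C" "sbdd q D"
  shows "hdist q (A + B) (C + D) \<le> hdist q A C + hdist q B D"
proof (rule hd_leI[OF q])
  show "A + B \<noteq> {}" "C + D \<noteq> {}" using ne by (auto simp: set_plus_def)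
next
  fix x e assume x: "x \<in> A + B" and e: "(e::real) > 0"
  then obtain a b where ab: "x = a + b" "a \<in> A" "b \<in> B" by (auto elim: set_plus_elim)
  obtain c where c: "c \<in> C" "q (a - c) < hdist q A C + e/2"
    using hd_approx[OF q ab(2) bd(1,3) ne(3), of "e/2"] e by auto
  obtain d where d: "d \<in> D" "q (b - d) < hdist q B D + e/2"
    using hd_approx[OF q ab(3) bd(2,4) ne(4), of "e/2"] e by auto
  have "q (x - (c + d)) \<le> q (a - c) + q (b - d)"
    using sn_add[OF q, of "a - c" "b - d"] ab by (simp add: algebra_simps)
  then show "\<exists>y\<in>C + D. q (x - y) \<le> hdist q A C + hdist q B D + e"
    using c d by (intro bexI[of _ "c + d"]) auto
next
  fix y e assume y: "y \<in> C + D" and e: "(e::real) > 0"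
  then obtain c d where cd: "y = c + d" "c \<in> C" "d \<in> D" by (auto elim: set_plus_elim)
  obtain a where a: "a \<in> A" "q (c - a) < hdist q A C + e/2"
    using hd_approx'[OF q cd(2) bd(1,3) ne(1), of "e/2"] e by auto
  obtain b where b: "b \<in> B" "q (d - b) < hdist q B D + e/2"
    using hd_approx'[OF q cd(3) bd(2,4) ne(2), of "e/2"] e by auto
  have "q (y - (a + b)) \<le> q (c - a) + q (d - b)"
    using sn_add[OF q, of "c - a" "d - b"] cd by (simp add: algebra_simps)
  then show "\<exists>x\<in>A + B. q (y - x) \<le> hdist q A C + hdist q B D + e"
    using a b by (intro bexI[of _ "a + b"]) auto
qed

lemma hdist_sscale:
  assumes q: "is_seminorm q" and ne: "A \<noteq> {}" "B \<noteq> {}" and bd: "sbdd q A" "sbdd q B"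
    and c: "c \<ge> 0"
  shows "hdist q (sscale c A) (sscale c B) \<le> c * hdist q A B"
proof (rule hd_leI[OF q])
  show "sscale c A \<noteq> {}" "sscale c B \<noteq> {}" using ne by (auto simp: sscale_def)
next
  fix x e assume x: "x \<in> sscale c A" and e: "(e::real) > 0"
  then obtain a where a: "a \<in> A" "x = c *\<^sub>R a" by (auto simp: sscale_def)
  obtain b where b: "b \<in> B" "q (a - b) < hdist q A B + e / (c + 1)"
    using hd_approx[OF q a(1) bd ne(2), of "e/(c+1)"] e c by auto
  have "q (x - c *\<^sub>R b) = c * q (a - b)"
    using sn_scale[OF q, of c "a - b"] a c by (simp add: algebra_simps)
  also have "\<dots> \<le> c * (hdist q A B + e / (c + 1))" using b c by (intro mult_left_mono) auto
  also have "\<dots> \<le> c * hdist q A B + e"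
  proof -
    have "c * (e / (c+1)) \<le> e" using c e by (simp add: field_simps)
    then show ?thesis by (simp add: algebra_simps)
  qed
  finally show "\<exists>y\<in>sscale c B. q (x - y) \<le> c * hdist q A B + e"
    using b by (intro bexI[of _ "c *\<^sub>R b"]) (auto simp: sscale_def)
next
  fix x e assume x: "x \<in> sscale c B" and e: "(e::real) > 0"
  then obtain b where b: "b \<in> B" "x = c *\<^sub>R b" by (auto simp: sscale_def)
  obtain a where a: "a \<in> A" "q (b - a) < hdist q A B + e / (c + 1)"
    using hd_approx'[OF q b(1) bd ne(1), of "e/(c+1)"] e c by auto
  have "q (x - c *\<^sub>R a) = c * q (b - a)"
    using sn_scale[OF q, of c "b - a"] b c by (simp add: algebra_simps)
  also have "\<dots> \<le> c * (hdist q A B + e / (c + 1))" using a c by (intro mult_left_mono) auto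
  also have "\<dots> \<le> c * hdist q A B + e"
  proof -
    have "c * (e / (c+1)) \<le> e" using c e by (simp add: field_simps)
    then show ?thesis by (simp add: algebra_simps)
  qed
  finally show "\<exists>y\<in>sscale c A. q (x - y) \<le> c * hdist q A B + e"
    using a by (intro bexI[of _ "c *\<^sub>R a"]) (auto simp: sscale_def)
qed

lemma msum_eq: "msum p A B = sn_closure p (A + B)"
  unfolding msum_def set_plus_def by (rule arg_cong[where f="sn_closure p"]) auto

section \<open>Frechet seminorm families\<close>

context
  fixes p :: "nat \<Rightarrow> 'a::real_vector \<Rightarrow> real"
  assumes fs: "frechet_seminorms p"
begin

lemma fsn: "is_seminorm (p i)"
  using fs by (simp add: frechet_seminorms_def)

lemma fmono: "i \<le> j \<Longrightarrow> p i x \<le> p j x"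
proof -
  have "\<forall>i x. p i x \<le> p (Suc i) x" using fs by (simp add: frechet_seminorms_def)
  then have "mono (\<lambda>i. p i x)" by (intro mono_iff_le_Suc[THEN iffD2]) auto
  then show "i \<le> j \<Longrightarrow> p i x \<le> p j x" by (simp add: mono_def)
qed

lemma fsep: "(\<And>i. p i x = 0) \<Longrightarrow> x = 0"
  using fs by (simp add: frechet_seminorms_def)

lemma conv_unique:
  assumes "sn_conv p f x" "sn_conv p f y" shows "x = y"
proof -
  have "p i (x - y) = 0" for i
  proof -
    have l: "(\<lambda>n. p i (f n - x) + p i (f n - y)) \<longlonglongrightarrow> 0"
      using assms tendsto_add[of "\<lambda>n. p i (f n - x)" 0 _ "\<lambda>n. p i (f n - y)" 0]
      by (auto simp: sn_conv_def)
    have "p i (x - y) \<le> p i (f n - x) + p i (f n - y)" for n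
      using sn_tri[OF fsn[of i], of x y "f n"] sn_commute[OF fsn[of i], of x "f n"] by linarith
    then have "p i (x - y) \<le> 0" using l by (intro LIMSEQ_le_const[OF l]) auto
    then show ?thesis using sn_nonneg[OF fsn[of i], of "x - y"] by linarith
  qed
  then show ?thesis using fsep[of "x - y"] by simp
qed

lemma conv_const: "sn_conv p (\<lambda>n. x) x"
  by (simp add: sn_conv_def sn_zero[OF fsn])

lemma conv_subseq: "sn_conv p f x \<Longrightarrow> strict_mono r \<Longrightarrow> sn_conv p (f \<circ> r) x"
proof -
  assume f: "sn_conv p f x" and r: "strict_mono r"
  show ?thesis unfolding sn_conv_def
  proof
    fix i
    have "(\<lambda>n. p i (f n - x)) \<longlonglongrightarrow> 0" using f by (simp add: sn_conv_def)
    from LIMSEQ_subseq_LIMSEQ[OF this r] show "(\<lambda>n. p i ((f \<circ> r) n - x)) \<longlonglongrightarrow> 0"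
      by (simp add: o_def)
  qed
qed

lemma closure_sup: "A \<subseteq> sn_closure p A"
  unfolding sn_closure_def by (auto intro!: exI[of _ "\<lambda>n. _"] conv_const)

lemma closure_ne: "A \<noteq> {} \<Longrightarrow> sn_closure p A \<noteq> {}"
  using closure_sup by blast

lemma closed_closure_eq: "sn_closed p C \<Longrightarrow> sn_closure p C = C"
  using closure_sup[of C] by (auto simp: sn_closed_def)

lemma closure_sbdd:
  assumes "sbdd (p i) A" shows "sbdd (p i) (sn_closure p A)"
proof -
  obtain M where M: "\<forall>x\<in>A. p i x \<le> M" using assms by (auto simp: sbdd_def)
  show ?thesis unfolding sbdd_def
  proof (intro exI[of _ M] ballI)
    fix x assume "x \<in> sn_closure p A"
    then obtain f where f: "\<forall>n. f n \<in> A" "sn_conv p f x" by (auto simp: sn_closure_def)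
    have l: "(\<lambda>n. p i (f n - x)) \<longlonglongrightarrow> 0" using f by (auto simp: sn_conv_def)
    have *: "p i x \<le> M + p i (f n - x)" for n
    proof -
      have "p i (f n) \<le> M" using M f by auto
      then show ?thesis using sn_rev[OF fsn[of i], of x "f n"] sn_commute[OF fsn[of i], of x "f n"] by linarith
    qed
    have "p i x \<le> M + 0"
      by (rule LIMSEQ_le_const[OF tendsto_add[OF tendsto_const l]]) (use * in blast)
    then show "p i x \<le> M" by simp
  qed
qed

lemma closure_zero: "sn_closure p {0} = {0}"
proof (rule set_eqI, rule iffI)
  fix x assume x: "x \<in> sn_closure p {0}"
  then obtain f where f: "\<forall>n. f n \<in> {0}" "sn_conv p f x" unfolding sn_closure_def by (rule CollectE) (elim exE conjE)
  have "f = (\<lambda>n. 0)" using f(1) by (simp add: fun_eq_iff)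
  then have "sn_conv p (\<lambda>n. 0) x" using f(2) by simp
  from conv_unique[OF this conv_const[of 0]] show "x \<in> {0}" by simp
next
  fix x :: 'a assume "x \<in> {0}" then show "x \<in> sn_closure p {0}" using closure_sup[of "{0}"] by (rule subsetD[rotated])
qed

lemma exc_closure_le:
  assumes ne: "A \<noteq> {}" and bd: "sbdd (p i) A"
  shows "exc (p i) (sn_closure p A) A \<le> 0"
proof (rule exc_leI[OF fsn closure_ne[OF ne] ne])
  fix x e assume x: "x \<in> sn_closure p A" and e: "(e::real) > 0"
  then obtain f where f: "\<forall>n. f n \<in> A" "sn_conv p f x" by (auto simp: sn_closure_def)
  have "(\<lambda>n. p i (f n - x)) \<longlonglongrightarrow> 0" using f by (auto simp: sn_conv_def)
  then obtain N where "\<forall>n\<ge>N. norm (p i (f n - x) - 0) < e" using e LIMSEQ_D by blast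
  then have "p i (f N - x) < e" by auto
  define n where "n = N"
  then have "p i (f n - x) < e" using \<open>p i (f N - x) < e\<close> by simp
  then show "\<exists>b\<in>A. p i (x - b) \<le> 0 + e"
    using f sn_commute[OF fsn[of i], of x "f n"] by (intro bexI[of _ "f n"]) auto
qed

lemma hdist_closure:
  assumes ne: "A \<noteq> {}" and bd: "sbdd (p i) A"
  shows "hdist (p i) A (sn_closure p A) \<le> 0"
proof -
  have "exc (p i) A (sn_closure p A) \<le> 0"
    by (rule exc_leI[OF fsn ne closure_ne[OF ne]])
       (use closure_sup[of A] sn_zero[OF fsn] in \<open>auto intro!: bexI\<close>)
  then show ?thesis using exc_closure_le[OF ne bd] by (simp add: hdist_def)
qed

lemma sbdd_mono_idx: "sbdd (p j) A \<Longrightarrow> i \<le> j \<Longrightarrow> sbdd (p i) A"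
  unfolding sbdd_def using fmono by (meson order_trans)

lemma sn_bounded_sbdd: "sn_bounded p A \<longleftrightarrow> (\<forall>i. sbdd (p i) A)"
  by (simp add: sn_bounded_def sbdd_def)

lemma hdist_mono_idx:
  assumes ne: "A \<noteq> {}" "B \<noteq> {}" and bd: "sbdd (p j) A" "sbdd (p j) B" and ij: "i \<le> j"
  shows "hdist (p i) A B \<le> hdist (p j) A B"
proof (rule hd_leI[OF fsn ne])
  fix a e assume a: "a \<in> A" and e: "(e::real) > 0"
  obtain b where "b \<in> B" "p j (a - b) < hdist (p j) A B + e"
    using hd_approx[OF fsn a bd ne(2) e] by auto
  then show "\<exists>b\<in>B. p i (a - b) \<le> hdist (p j) A B + e"
    using fmono[OF ij, of "a - b"] by (intro bexI[of _ b]) auto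
next
  fix b e assume b: "b \<in> B" and e: "(e::real) > 0"
  obtain a where "a \<in> A" "p j (b - a) < hdist (p j) A B + e"
    using hd_approx'[OF fsn b bd ne(1) e] by auto
  then show "\<exists>a\<in>A. p i (b - a) \<le> hdist (p j) A B + e"
    using fmono[OF ij, of "b - a"] by (intro bexI[of _ a]) auto
qed

lemma compact_closed:
  assumes "sn_compact p C" shows "sn_closed p C"
  unfolding sn_closed_def
proof
  fix x assume "x \<in> sn_closure p C"
  then obtain f where f: "\<forall>n. f n \<in> C" "sn_conv p f x" by (auto simp: sn_closure_def)
  then obtain r y where ry: "strict_mono r" "y \<in> C" "sn_conv p (f \<circ> r) y"
    using assms[unfolded sn_compact_def, rule_format, of f] f(1) by blast
  have "sn_conv p (f \<circ> r) x" using conv_subseq[OF f(2) ry(1)] .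
  then show "x \<in> C" using conv_unique[OF _ ry(3)] ry(2) by simp
qed

lemma compact_bounded:
  assumes "sn_compact p C" shows "sn_bounded p C"
proof (rule ccontr)
  assume "\<not> sn_bounded p C"
  then obtain i where i: "\<forall>M. \<exists>x\<in>C. M < p i x" by (auto simp: sn_bounded_def not_le)
  then have ex: "\<forall>n. \<exists>x. x \<in> C \<and> real n < p i x" by blast
  obtain f where f: "\<forall>n. f n \<in> C \<and> real n < p i (f n)" using choice[OF ex] by blast
  then have "\<forall>n. f n \<in> C" by blast
  then obtain r y where ry: "strict_mono r" "y \<in> C" "sn_conv p (f \<circ> r) y"
    using assms[unfolded sn_compact_def, rule_format, of f] \<open>\<forall>n. f n \<in> C\<close> by blast
  then have l: "(\<lambda>n. p i (f (r n) - y)) \<longlonglongrightarrow> 0" by (auto simp: sn_conv_def)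
  then obtain N where N0: "\<forall>n\<ge>N. \<bar>p i (f (r n) - y) - 0\<bar> < 1"
    using LIMSEQ_D[OF l, of 1] by auto
  then have N: "\<forall>n\<ge>N. p i (f (r n) - y) < 1" by (auto simp: abs_less_iff)
  obtain k where k: "p i y + 1 < real k" using reals_Archimedean2 by blast
  define n where "n = max N k"
  have n: "n \<ge> N" "real n > p i y + 1" using k by (auto simp: n_def)
  have "r n \<ge> n" using ry(1) seq_suble by blast
  then have "real (r n) > p i y + 1" using n by linarith
  moreover have "p i (f (r n)) \<le> p i y + p i (f (r n) - y)" by (rule sn_rev[OF fsn])
  moreover have "p i (f (r n) - y) < 1" using N n \<open>r n \<ge> n\<close> by auto
  ultimately show False using f[rule_format, of "r n"] by linarith
qed

lemma ck_props:
  assumes "C \<in> ck p" shows "C \<noteq> {}" "sn_closed p C" "\<And>i. sbdd (p i) C" "convex C"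
  using assms compact_closed compact_bounded by (auto simp: ck_def sn_bounded_sbdd)

lemma cbc_props:
  assumes "C \<in> cbc p" shows "C \<noteq> {}" "sn_closed p C" "\<And>i. sbdd (p i) C" "convex C"
  using assms by (auto simp: cbc_def sn_bounded_sbdd)

lemma eq_of_hdist:
  assumes A: "A \<noteq> {}" "sn_closed p A" "\<And>i. sbdd (p i) A"
    and B: "B \<noteq> {}" "sn_closed p B" "\<And>i. sbdd (p i) B"
    and h: "\<And>i. hdist (p i) A B \<le> 0"
  shows "A = B"
proof -
  have sub: "X \<subseteq> Y" if X: "X \<noteq> {}" "\<And>i. sbdd (p i) X"
     and Y: "Y \<noteq> {}" "sn_closed p Y" "\<And>i. sbdd (p i) Y"
     and h: "\<And>i. hdist (p i) X Y \<le> 0" for X Y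
  proof
    fix x assume x: "x \<in> X"
    have "\<exists>y\<in>Y. p i (x - y) < 1 / (Suc i)" for i
      using hd_approx[OF fsn[of i] x X(2) Y(3) Y(1), of "1 / Suc i"] h[of i] by force
    then obtain g where g: "\<And>i. g i \<in> Y" "\<And>i. p i (x - g i) < 1 / Suc i" by metis
    have "sn_conv p g x" unfolding sn_conv_def
    proof
      fix j
      show "(\<lambda>n. p j (g n - x)) \<longlonglongrightarrow> 0"
      proof (rule tendsto_sandwich[where f="\<lambda>_. 0" and h="\<lambda>n. 1 / Suc n"])
        show "\<forall>\<^sub>F n in sequentially. 0 \<le> p j (g n - x)" by (simp add: sn_nonneg[OF fsn])
        show "\<forall>\<^sub>F n in sequentially. p j (g n - x) \<le> 1 / Suc n"
          unfolding eventually_sequentially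
        proof (intro exI[of _ j] allI impI)
          fix n assume "j \<le> n"
          then have "p j (g n - x) \<le> p n (g n - x)" by (rule fmono)
          then show "p j (g n - x) \<le> 1 / Suc n"
            using g(2)[of n] sn_commute[OF fsn[of n], of x "g n"] by linarith
        qed
      qed (rule tendsto_const, rule LIMSEQ_Suc[OF lim_const_over_n[of 1]])
    qed
    then have "x \<in> sn_closure p Y" using g(1) by (auto simp: sn_closure_def)
    then show "x \<in> Y" using Y(2) by (auto simp: sn_closed_def)
  qed
  show ?thesis
  proof (rule subset_antisym)
    show "A \<subseteq> B" using sub[OF A(1,3) B h] .
    show "B \<subseteq> A" using sub[OF B(1,3) A(1-3)] h hd_sym[OF fsn] by metis
  qed
qed

end


lemma plus_ne: "A \<noteq> {} \<Longrightarrow> B \<noteq> {} \<Longrightarrow> (A::'a::plus set) + B \<noteq> {}"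
  using set_plus_intro by blast

lemma sscale_0: "C \<noteq> {} \<Longrightarrow> sscale 0 C = {0}"
  by (auto simp: sscale_def)
lemma sscale_1: "sscale 1 C = C"
  by (auto simp: sscale_def)
lemma sscale_zero_set: "sscale c {0} = {0}"
  by (auto simp: sscale_def)

lemma simple_rep_Cons:
  assumes "simple_rep p (x # L)"
  shows "simple_rep p L" "fst x \<in> sets (lebesgue_on {0..1})" "snd x \<in> cbc p"
    "\<And>j. j < length L \<Longrightarrow> fst x \<inter> fst (L ! j) = {}"
proof -
  have a: "\<forall>j<length (x#L). fst ((x#L) ! j) \<in> sets (lebesgue_on {0..1}) \<and> snd ((x#L) ! j) \<in> cbc p"
   and b: "\<forall>j<length (x#L). \<forall>k<length (x#L). j \<noteq> k \<longrightarrow> fst ((x#L) ! j) \<inter> fst ((x#L) ! k) = {}"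
    using assms by (auto simp: simple_rep_def)
  show "simple_rep p L" unfolding simple_rep_def
  proof (intro conjI allI impI)
    fix j assume "j < length L"
    then show "fst (L ! j) \<in> sets (lebesgue_on {0..1})" "snd (L ! j) \<in> cbc p"
      using a[rule_format, of "Suc j"] by auto
  next
    fix j k assume "j < length L" "k < length L" "j \<noteq> k"
    then show "fst (L ! j) \<inter> fst (L ! k) = {}" using b[rule_format, of "Suc j" "Suc k"] by auto
  qed
  show "fst x \<in> sets (lebesgue_on {0..1})" "snd x \<in> cbc p" using a[rule_format, of 0] by auto
  fix j assume "j < length L"
  then show "fst x \<inter> fst (L ! j) = {}" using b[rule_format, of 0 "Suc j"] by auto
qed

definition sint_plain :: "(real set \<times> 'a::real_vector set) list \<Rightarrow> real set \<Rightarrow> 'a::real_vector set" where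
  "sint_plain L E = sum_list (map (\<lambda>(A, C). sscale (measure lebesgue (A \<inter> E)) C) L)"

context
  fixes p :: "nat \<Rightarrow> 'a::real_vector \<Rightarrow> real"
  assumes fs: "frechet_seminorms p"
begin

lemma sval_out:
  assumes "simple_rep p L" "\<forall>j<length L. t \<notin> fst (L ! j)"
  shows "simple_val p L t = {0}"
  using assms
proof (induction L)
  case Nil
  then show ?case by (simp add: simple_val_def)
next
  case (Cons x L)
  obtain A C where x: "x = (A, C)" by (cases x)
  note r = simple_rep_Cons[OF Cons.prems(1)]
  have C: "C \<in> cbc p" using r(2,3) x by auto
  have tA: "t \<notin> A" using Cons.prems(2) x by force
  have "\<forall>j<length L. t \<notin> fst (L ! j)"
  proof (intro allI impI)
    fix k assume "k < length L" then show "t \<notin> fst (L ! k)" using Cons.prems(2) by force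
  qed
  then have s0: "simple_val p L t = {0}" using Cons.IH r(1) by blast
  have s1: "sscale (indicator A t) C = {0}" using tA cbc_props(1)[OF fs C] by (simp add: sscale_0)
  have "simple_val p (x # L) t = msum p (sscale (indicator A t) C) (simple_val p L t)"
    by (simp add: simple_val_def x)
  also have "\<dots> = sn_closure p ({0} + {0})" unfolding s0 s1 msum_eq ..
  also have "\<dots> = {0}" using closure_zero[OF fs] by simp
  finally show ?case .
qed

lemma sval_in:
  assumes "simple_rep p L" "j < length L" "t \<in> fst (L ! j)"
  shows "simple_val p L t = snd (L ! j)"
  using assms
proof (induction L arbitrary: j)
  case Nil
  then show ?case by simp
next
  case (Cons x L)
  obtain A C where x: "x = (A, C)" by (cases x)
  note r = simple_rep_Cons[OF Cons.prems(1)]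
  have C: "C \<in> cbc p" using r(2,3) x by auto
  have eq: "simple_val p (x # L) t = msum p (sscale (indicator A t) C) (simple_val p L t)"
    by (simp add: simple_val_def x)
  show ?case
  proof (cases j)
    case 0
    then have tA: "t \<in> A" using Cons.prems(3) x by simp
    have notin: "\<forall>k<length L. t \<notin> fst (L ! k)"
    proof (intro allI impI)
      fix k assume "k < length L"
      then show "t \<notin> fst (L ! k)" using r(4)[of k] tA x by auto
    qed
    have s0: "simple_val p L t = {0}" by (rule sval_out[OF r(1) notin])
    have s1: "sscale (indicator A t) C = C" using tA by (simp add: sscale_1)
    have "simple_val p (x # L) t = sn_closure p (C + {0})" unfolding eq s0 s1 msum_eq ..
    also have "\<dots> = C" using closed_closure_eq[OF fs cbc_props(2)[OF fs C]] by simp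
    finally show ?thesis using 0 x by simp
  next
    case (Suc k)
    have k: "k < length L" "t \<in> fst (L ! k)" using Cons.prems(2,3) Suc by auto
    have tA: "t \<notin> A" using r(4)[OF k(1)] k(2) x by auto
    have s0: "simple_val p L t = snd (L ! k)" by (rule Cons.IH[OF r(1) k])
    have cl: "sn_closed p (snd (L ! k))" using r(1) k(1) cbc_props(2)[OF fs] by (auto simp: simple_rep_def)
    have s1: "sscale (indicator A t) C = {0}" using tA cbc_props(1)[OF fs C] by (simp add: sscale_0)
    have "simple_val p (x # L) t = sn_closure p ({0} + snd (L ! k))" unfolding eq s0 s1 msum_eq ..
    also have "\<dots> = snd (L ! k)" using closed_closure_eq[OF fs cl] by simp
    finally show ?thesis using Suc by simp
  qed
qed

lemma sval_props:
  assumes "simple_rep p L"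
  shows "simple_val p L t \<noteq> {}" "sn_closed p (simple_val p L t)" "\<And>i. sbdd (p i) (simple_val p L t)"
proof -
  have "simple_val p L t \<noteq> {} \<and> sn_closed p (simple_val p L t) \<and> (\<forall>i. sbdd (p i) (simple_val p L t))"
  proof (cases "\<exists>j<length L. t \<in> fst (L ! j)")
    case True
    then obtain j where j: "j < length L" "t \<in> fst (L ! j)" by blast
    then have "simple_val p L t = snd (L ! j)" using sval_in[OF assms] by blast
    moreover have "snd (L ! j) \<in> cbc p" using assms j by (auto simp: simple_rep_def)
    ultimately show ?thesis using cbc_props[OF fs] by auto
  next
    case False
    then have "simple_val p L t = {0}" using sval_out[OF assms] by blast
    then show ?thesis using closure_zero[OF fs] sbdd_zero[OF fsn[OF fs]] by (simp add: sn_closed_def)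
  qed
  then show "simple_val p L t \<noteq> {}" "sn_closed p (simple_val p L t)" "\<And>i. sbdd (p i) (simple_val p L t)"
    by auto
qed

lemma sint:
  assumes "simple_rep p L"
  shows "simple_int p L E \<noteq> {}" "\<And>i. sbdd (p i) (simple_int p L E)"
    "sint_plain L E \<noteq> {}" "\<And>i. sbdd (p i) (sint_plain L E)"
    "\<And>i. hdist (p i) (simple_int p L E) (sint_plain L E) \<le> 0"
proof -
  have "simple_int p L E \<noteq> {} \<and> (\<forall>i. sbdd (p i) (simple_int p L E)) \<and>
    sint_plain L E \<noteq> {} \<and> (\<forall>i. sbdd (p i) (sint_plain L E)) \<and>
    (\<forall>i. hdist (p i) (simple_int p L E) (sint_plain L E) \<le> 0)"
    using assms
  proof (induction L)
    case Nil
    then show ?case using hd_self[OF fsn[OF fs]] sbdd_zero[OF fsn[OF fs]]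
      by (simp add: simple_int_def sint_plain_def)
  next
    case (Cons x L)
    obtain A C where x: "x = (A, C)" by (cases x)
    note r = simple_rep_Cons[OF Cons.prems]
    note IH = Cons.IH[OF r(1)]
    have C: "C \<in> cbc p" using r(2,3) x by auto
    define X where "X = sscale (measure lebesgue (A \<inter> E)) C"
    define S where "S = simple_int p L E"
    define T where "T = sint_plain L E"
    have eqS: "simple_int p (x # L) E = sn_closure p (X + S)"
      by (simp add: simple_int_def x X_def S_def msum_eq)
    have eqT: "sint_plain (x # L) E = X + T"
      by (simp add: sint_plain_def x X_def T_def)
    have X: "X \<noteq> {}" "\<And>i. sbdd (p i) X"
      using cbc_props[OF fs C] sbdd_sscale[OF fsn[OF fs]] by (auto simp: X_def sscale_def)
    have S: "S \<noteq> {}" "\<And>i. sbdd (p i) S" and T: "T \<noteq> {}" "\<And>i. sbdd (p i) T"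
      and ST: "\<And>i. hdist (p i) S T \<le> 0"
      using IH by (auto simp: S_def T_def)
    have XS: "X + S \<noteq> {}" "\<And>i. sbdd (p i) (X + S)"
      using X S sbdd_plus[OF fsn[OF fs]] plus_ne by auto
    have XT: "X + T \<noteq> {}" "\<And>i. sbdd (p i) (X + T)"
      using X T sbdd_plus[OF fsn[OF fs]] plus_ne by auto
    have cXS: "sn_closure p (X + S) \<noteq> {}" "\<And>i. sbdd (p i) (sn_closure p (X + S))"
      using closure_ne[OF fs XS(1)] closure_sbdd[OF fs XS(2)] by auto
    have "hdist (p i) (sn_closure p (X + S)) (X + T) \<le> 0" for i
    proof -
      have "hdist (p i) (sn_closure p (X + S)) (X + T)
          \<le> hdist (p i) (sn_closure p (X + S)) (X + S) + hdist (p i) (X + S) (X + T)"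
        by (rule hd_tri[OF fsn[OF fs] cXS(1) XS(1) XT(1) cXS(2) XS(2) XT(2)])
      also have "hdist (p i) (sn_closure p (X + S)) (X + S) \<le> 0"
        using hdist_closure[OF fs XS(1) XS(2)] hd_sym[OF fsn[OF fs]] by metis
      also have "hdist (p i) (X + S) (X + T) \<le> hdist (p i) X X + hdist (p i) S T"
        by (rule hdist_plus[OF fsn[OF fs] X(1) S(1) X(1) T(1) X(2) S(2) X(2) T(2)])
      also have "\<dots> \<le> 0" using hd_self[OF fsn[OF fs, of i] X(1)] ST[of i] by linarith
      finally show ?thesis by simp
    qed
    then show ?case using eqS eqT cXS XT by auto
  qed
  then show "simple_int p L E \<noteq> {}" "\<And>i. sbdd (p i) (simple_int p L E)"
    "sint_plain L E \<noteq> {}" "\<And>i. sbdd (p i) (sint_plain L E)"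
    "\<And>i. hdist (p i) (simple_int p L E) (sint_plain L E) \<le> 0" by auto
qed

end


lemma hdist_sum:
  assumes q: "is_seminorm q" and fin: "finite I"
    and ne: "\<And>j. j \<in> I \<Longrightarrow> X j \<noteq> {} \<and> Y j \<noteq> {} \<and> sbdd q (X j) \<and> sbdd q (Y j)"
  shows "sum X I \<noteq> {} \<and> sum Y I \<noteq> {} \<and> sbdd q (sum X I) \<and> sbdd q (sum Y I)
     \<and> hdist q (sum X I) (sum Y I) \<le> (\<Sum>j\<in>I. hdist q (X j) (Y j))"
  using fin ne
proof (induction I rule: finite_induct)
  case empty
  then show ?case using hd_self[OF q, of "{0}"] sbdd_zero[OF q] by simp
next
  case (insert x F)
  have IH: "sum X F \<noteq> {}" "sum Y F \<noteq> {}" "sbdd q (sum X F)" "sbdd q (sum Y F)"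
     "hdist q (sum X F) (sum Y F) \<le> (\<Sum>j\<in>F. hdist q (X j) (Y j))"
    using insert.IH insert.prems by auto
  have x: "X x \<noteq> {}" "Y x \<noteq> {}" "sbdd q (X x)" "sbdd q (Y x)" using insert.prems by auto
  have sX: "sum X (insert x F) = X x + sum X F" and sY: "sum Y (insert x F) = Y x + sum Y F"
    using insert.hyps by auto
  have "hdist q (X x + sum X F) (Y x + sum Y F) \<le> hdist q (X x) (Y x) + hdist q (sum X F) (sum Y F)"
    by (rule hdist_plus[OF q x(1) IH(1) x(2) IH(2) x(3) IH(3) x(4) IH(4)])
  also have "\<dots> \<le> hdist q (X x) (Y x) + (\<Sum>j\<in>F. hdist q (X j) (Y j))" using IH(5) by simp
  also have "\<dots> = (\<Sum>j\<in>insert x F. hdist q (X j) (Y j))" using insert.hyps by simp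
  finally show ?case unfolding sX sY
    using plus_ne[OF x(1) IH(1)] plus_ne[OF x(2) IH(2)] sbdd_plus[OF q x(3) IH(3)] sbdd_plus[OF q x(4) IH(4)]
    by simp
qed

lemma sscale_add_convex:
  assumes C: "convex C" "C \<noteq> {}" and ab: "a \<ge> 0" "b \<ge> 0"
  shows "sscale (a + b) C = sscale a C + sscale b C"
proof (rule set_eqI, rule iffI)
  fix z assume "z \<in> sscale (a + b) C"
  then obtain x where x: "x \<in> C" "z = (a + b) *\<^sub>R x" by (auto simp: sscale_def)
  then have "z = a *\<^sub>R x + b *\<^sub>R x" by (simp add: scaleR_add_left)
  then show "z \<in> sscale a C + sscale b C" using x(1) by (auto simp: sscale_def intro!: set_plus_intro)
next
  fix z assume "z \<in> sscale a C + sscale b C"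
  then obtain x y where xy: "x \<in> C" "y \<in> C" "z = a *\<^sub>R x + b *\<^sub>R y"
    by (auto simp: sscale_def elim!: set_plus_elim)
  show "z \<in> sscale (a + b) C"
  proof (cases "a + b = 0")
    case True
    then have "a = 0" "b = 0" using ab by auto
    then show ?thesis using xy by (auto simp: sscale_def intro!: image_eqI[of _ _ x])
  next
    case False
    then have pos: "a + b > 0" using ab by auto
    define w where "w = (a / (a + b)) *\<^sub>R x + (b / (a + b)) *\<^sub>R y"
    have "w \<in> C" unfolding w_def
      by (rule convexD[OF C(1) xy(1,2)]) (use ab pos in \<open>auto simp: add_divide_distrib[symmetric]\<close>)
    moreover have "(a + b) *\<^sub>R w = z"
      using pos by (simp add: w_def xy(3) scaleR_add_right)
    ultimately show ?thesis by (auto simp: sscale_def)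
  qed
qed

lemma sscale_sum_convex:
  assumes fin: "finite K" and C: "convex C" "C \<noteq> {}" and w: "\<And>k. k \<in> K \<Longrightarrow> w k \<ge> 0"
  shows "sscale (\<Sum>k\<in>K. w k) C = (\<Sum>k\<in>K. sscale (w k) C)"
  using fin w
proof (induction K rule: finite_induct)
  case empty
  then show ?case using sscale_0[OF C(2)] by simp
next
  case (insert x F)
  have "sscale (\<Sum>k\<in>insert x F. w k) C = sscale (w x + (\<Sum>k\<in>F. w k)) C" using insert.hyps by simp
  also have "\<dots> = sscale (w x) C + sscale (\<Sum>k\<in>F. w k) C"
    by (rule sscale_add_convex[OF C]) (use insert.prems in \<open>auto intro: sum_nonneg\<close>)
  also have "\<dots> = (\<Sum>k\<in>insert x F. sscale (w k) C)" using insert by simp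
  finally show ?case .
qed


abbreviation "M01 \<equiv> lebesgue_on {0..(1::real)}"

lemma M01_sets: "X \<in> sets M01 \<longleftrightarrow> X \<subseteq> {0..1} \<and> X \<in> sets lebesgue"
  by (subst sets_restrict_space_iff) auto

lemma M01_emeasure_fin: "emeasure M01 X < \<infinity>"
proof -
  have "emeasure M01 X \<le> emeasure M01 (space M01)"
    by (rule emeasure_space)
  also have "emeasure M01 (space M01) = emeasure lebesgue {0..1::real}"
    by (simp add: emeasure_restrict_space)
  also have "\<dots> < \<infinity>"
    using lmeasurable_cbox[of "0::real" 1] by (simp add: cbox_interval fmeasurable_def)
  finally show ?thesis .
qed

lemma M01_measure: "X \<in> sets M01 \<Longrightarrow> measure M01 X = measure lebesgue X"
  by (rule measure_restrict_space) (auto simp: M01_sets)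

definition eA :: "(real set \<times> 'b) list \<Rightarrow> nat \<Rightarrow> real set" where
  "eA L j = (if j < length L then fst (L ! j) else {0..1} - (\<Union>k<length L. fst (L ! k)))"

definition eC :: "(real set \<times> 'a set) list \<Rightarrow> nat \<Rightarrow> 'a::real_vector set" where
  "eC L j = (if j < length L then snd (L ! j) else {0})"

context
  fixes p :: "nat \<Rightarrow> 'a::real_vector \<Rightarrow> real"
  assumes fs: "frechet_seminorms p"
begin

lemma eA_sets:
  assumes L: "simple_rep p L" and j: "j \<le> length L"
  shows "eA L j \<in> sets M01"
proof (cases "j < length L")
  case True
  then show ?thesis using L by (simp add: eA_def simple_rep_def)
next
  case False
  have "(\<Union>k<length L. fst (L ! k)) \<in> sets M01"
    using L by (intro sets.finite_UN) (auto simp: simple_rep_def)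
  then have "space M01 - (\<Union>k<length L. fst (L ! k)) \<in> sets M01" by blast
  then show ?thesis using False by (simp add: eA_def)
qed

lemma eA_sub: "simple_rep p L \<Longrightarrow> j \<le> length L \<Longrightarrow> eA L j \<subseteq> {0..1}"
  using eA_sets M01_sets by blast

lemma eA_disj:
  assumes L: "simple_rep p L" and "j \<le> length L" "k \<le> length L" "j \<noteq> k"
  shows "eA L j \<inter> eA L k = {}"
proof -
  consider "j < length L" "k < length L" | "j = length L" "k < length L" | "j < length L" "k = length L"
    using assms by linarith
  then show ?thesis
  proof cases
    case 1 then show ?thesis using L assms(4) by (simp add: eA_def simple_rep_def)
  next
    case 2 then show ?thesis by (auto simp: eA_def)
  next
    case 3 then show ?thesis by (auto simp: eA_def)
  qed
qed

lemma eA_cover: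
  assumes "t \<in> {0..1}" shows "\<exists>j\<le>length L. t \<in> eA L j"
proof (cases "\<exists>k<length L. t \<in> fst (L ! k)")
  case True
  then obtain k where "k < length L" "t \<in> fst (L ! k)" by blast
  then show ?thesis by (intro exI[of _ k]) (auto simp: eA_def)
next
  case False
  then show ?thesis using assms by (intro exI[of _ "length L"]) (auto simp: eA_def)
qed

lemma sv_eA:
  assumes L: "simple_rep p L" and j: "j \<le> length L" and t: "t \<in> eA L j"
  shows "simple_val p L t = eC L j"
proof (cases "j < length L")
  case True
  then show ?thesis using sval_in[OF fs L True] t by (simp add: eA_def eC_def)
next
  case False
  then have "\<forall>k<length L. t \<notin> fst (L ! k)" using t by (auto simp: eA_def)
  then show ?thesis using sval_out[OF fs L] False by (simp add: eC_def)
qed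

lemma eC_props:
  assumes L: "simple_rep p L" and j: "j \<le> length L"
  shows "eC L j \<noteq> {}" "convex (eC L j)" "\<And>i. sbdd (p i) (eC L j)"
proof -
  have "eC L j \<noteq> {} \<and> convex (eC L j) \<and> (\<forall>i. sbdd (p i) (eC L j))"
  proof (cases "j < length L")
    case True
    then have "snd (L ! j) \<in> cbc p" using L by (simp add: simple_rep_def)
    then show ?thesis using True cbc_props[OF fs] by (simp add: eC_def)
  next
    case False
    then show ?thesis using sbdd_zero[OF fsn[OF fs]] by (simp add: eC_def)
  qed
  then show "eC L j \<noteq> {}" "convex (eC L j)" "\<And>i. sbdd (p i) (eC L j)" by auto
qed

lemma splain:
  assumes L: "simple_rep p L"
  shows "sint_plain L E = (\<Sum>j\<le>length L. sscale (measure lebesgue (eA L j \<inter> E)) (eC L j))"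
proof -
  have "sint_plain L E = sum_list (map (\<lambda>(A, C). sscale (measure lebesgue (A \<inter> E)) C) L)"
    by (simp add: sint_plain_def)
  also have "\<dots> = (\<Sum>j<length L. sscale (measure lebesgue (fst (L ! j) \<inter> E)) (snd (L ! j)))"
    by (simp add: sum_list_sum_nth atLeast0LessThan case_prod_beta)
  also have "\<dots> = (\<Sum>j<length L. sscale (measure lebesgue (eA L j \<inter> E)) (eC L j))"
    by (rule sum.cong) (auto simp: eA_def eC_def)
  also have "\<dots> = (\<Sum>j\<le>length L. sscale (measure lebesgue (eA L j \<inter> E)) (eC L j))"
    unfolding lessThan_Suc_atMost[symmetric] by (simp add: eC_def sscale_zero_set)
  finally show ?thesis .
qed

end


context
  fixes p :: "nat \<Rightarrow> 'a::real_vector \<Rightarrow> real"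
  assumes fs: "frechet_seminorms p"
begin

lemma split_measure:
  assumes L: "simple_rep p L" and X: "X \<in> sets M01"
  shows "measure M01 X = (\<Sum>j\<le>length L. measure M01 (eA L j \<inter> X))"
proof -
  have XU: "X = (\<Union>j\<in>{..length L}. eA L j \<inter> X)"
  proof
    show "X \<subseteq> (\<Union>j\<in>{..length L}. eA L j \<inter> X)"
    proof
      fix t assume t: "t \<in> X"
      then have "t \<in> {0..1}" using X M01_sets by blast
      then obtain j where "j \<le> length L" "t \<in> eA L j" using eA_cover[OF fs] by blast
      then show "t \<in> (\<Union>j\<in>{..length L}. eA L j \<inter> X)" using t by auto
    qed
  qed auto
  have "measure M01 (\<Union>j\<in>{..length L}. eA L j \<inter> X) = (\<Sum>j\<le>length L. measure M01 (eA L j \<inter> X))"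
  proof (rule measure_finite_Union)
    show "(\<lambda>j. eA L j \<inter> X) ` {..length L} \<subseteq> sets M01"
      using eA_sets[OF fs L] X by auto
    show "disjoint_family_on (\<lambda>j. eA L j \<inter> X) {..length L}"
      unfolding disjoint_family_on_def using eA_disj[OF fs L] by auto
    show "\<And>i. emeasure M01 (eA L i \<inter> X) \<noteq> \<infinity>" using M01_emeasure_fin by (simp add: less_top)
  qed auto
  then show ?thesis using XU by simp
qed

lemma int_le:
  assumes L: "simple_rep p L" and L': "simple_rep p L'" and E: "E \<in> sets M01"
  shows "integrable M01 (\<lambda>t. indicator E t * hdist (p i) (simple_val p L t) (simple_val p L' t))"
    "hdist (p i) (simple_int p L E) (simple_int p L' E)
       \<le> (\<integral>t. indicator E t * hdist (p i) (simple_val p L t) (simple_val p L' t) \<partial>M01)"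
proof -
  let ?q = "p i"
  have q: "is_seminorm ?q" by (rule fsn[OF fs])
  define n where "n = length L"
  define m where "m = length L'"
  define c where "c j k = measure M01 (eA L j \<inter> eA L' k \<inter> E)" for j k
  define h where "h j k = hdist ?q (eC L j) (eC L' k)" for j k
  have c_nn: "c j k \<ge> 0" for j k by (simp add: c_def)
  have setsX: "eA L j \<inter> eA L' k \<inter> E \<in> sets M01" if "j \<le> n" "k \<le> m" for j k
    using eA_sets[OF fs L, of j] eA_sets[OF fs L', of k] E that by (auto simp: n_def m_def)
  have CL: "eC L j \<noteq> {}" "convex (eC L j)" "sbdd ?q (eC L j)" if "j \<le> n" for j
    using eC_props[OF fs L, of j] that by (auto simp: n_def)
  have CL': "eC L' k \<noteq> {}" "convex (eC L' k)" "sbdd ?q (eC L' k)" if "k \<le> m" for k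
    using eC_props[OF fs L', of k] that by (auto simp: m_def)
  have aj: "measure lebesgue (eA L j \<inter> E) = (\<Sum>k\<le>m. c j k)" if j: "j \<le> n" for j
  proof -
    have s: "eA L j \<inter> E \<in> sets M01" using eA_sets[OF fs L, of j] E j by (auto simp: n_def)
    have "measure lebesgue (eA L j \<inter> E) = measure M01 (eA L j \<inter> E)" using M01_measure[OF s] by simp
    also have "\<dots> = (\<Sum>k\<le>m. measure M01 (eA L' k \<inter> (eA L j \<inter> E)))"
      using split_measure[OF L' s] by (simp add: m_def)
    also have "\<dots> = (\<Sum>k\<le>m. c j k)" by (simp add: c_def Int_ac)
    finally show ?thesis .
  qed
  have bk: "measure lebesgue (eA L' k \<inter> E) = (\<Sum>j\<le>n. c j k)" if k: "k \<le> m" for k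
  proof -
    have s: "eA L' k \<inter> E \<in> sets M01" using eA_sets[OF fs L', of k] E k by (auto simp: m_def)
    have "measure lebesgue (eA L' k \<inter> E) = measure M01 (eA L' k \<inter> E)" using M01_measure[OF s] by simp
    also have "\<dots> = (\<Sum>j\<le>n. measure M01 (eA L j \<inter> (eA L' k \<inter> E)))"
      using split_measure[OF L s] by (simp add: n_def)
    also have "\<dots> = (\<Sum>j\<le>n. c j k)" by (simp add: c_def Int_ac)
    finally show ?thesis .
  qed
  define X where "X j k = sscale (c j k) (eC L j)" for j k
  define Y where "Y j k = sscale (c j k) (eC L' k)" for j k
  have PL: "sint_plain L E = (\<Sum>j\<le>n. \<Sum>k\<le>m. X j k)"
  proof -
    have "sint_plain L E = (\<Sum>j\<le>n. sscale (measure lebesgue (eA L j \<inter> E)) (eC L j))"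
      using splain[OF fs L] by (simp add: n_def)
    also have "\<dots> = (\<Sum>j\<le>n. \<Sum>k\<le>m. X j k)"
    proof (rule sum.cong[OF refl])
      fix j assume "j \<in> {..n}"
      then have j: "j \<le> n" by simp
      show "sscale (measure lebesgue (eA L j \<inter> E)) (eC L j) = (\<Sum>k\<le>m. X j k)"
        unfolding aj[OF j] X_def by (rule sscale_sum_convex) (use CL[OF j] c_nn in auto)
    qed
    finally show ?thesis .
  qed
  have PL': "sint_plain L' E = (\<Sum>j\<le>n. \<Sum>k\<le>m. Y j k)"
  proof -
    have "sint_plain L' E = (\<Sum>k\<le>m. sscale (measure lebesgue (eA L' k \<inter> E)) (eC L' k))"
      using splain[OF fs L'] by (simp add: m_def)
    also have "\<dots> = (\<Sum>k\<le>m. \<Sum>j\<le>n. Y j k)"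
    proof (rule sum.cong[OF refl])
      fix k assume "k \<in> {..m}"
      then have k: "k \<le> m" by simp
      show "sscale (measure lebesgue (eA L' k \<inter> E)) (eC L' k) = (\<Sum>j\<le>n. Y j k)"
        unfolding bk[OF k] Y_def by (rule sscale_sum_convex) (use CL'[OF k] c_nn in auto)
    qed
    also have "\<dots> = (\<Sum>j\<le>n. \<Sum>k\<le>m. Y j k)" by (rule sum.swap)
    finally show ?thesis .
  qed
  have XY: "X j k \<noteq> {} \<and> Y j k \<noteq> {} \<and> sbdd ?q (X j k) \<and> sbdd ?q (Y j k)" if "j \<le> n" "k \<le> m" for j k
    using CL[OF that(1)] CL'[OF that(2)] sbdd_sscale[OF q] by (auto simp: X_def Y_def sscale_def)
  have XYh: "hdist ?q (X j k) (Y j k) \<le> c j k * h j k" if "j \<le> n" "k \<le> m" for j k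
    unfolding X_def Y_def h_def
    by (rule hdist_sscale[OF q]) (use CL[OF that(1)] CL'[OF that(2)] c_nn in auto)
  have inner: "(\<Sum>k\<le>m. X j k) \<noteq> {} \<and> (\<Sum>k\<le>m. Y j k) \<noteq> {} \<and> sbdd ?q (\<Sum>k\<le>m. X j k) \<and> sbdd ?q (\<Sum>k\<le>m. Y j k)
     \<and> hdist ?q (\<Sum>k\<le>m. X j k) (\<Sum>k\<le>m. Y j k) \<le> (\<Sum>k\<le>m. c j k * h j k)" if j: "j \<le> n" for j
  proof -
    have "(\<Sum>k\<le>m. X j k) \<noteq> {} \<and> (\<Sum>k\<le>m. Y j k) \<noteq> {} \<and> sbdd ?q (\<Sum>k\<le>m. X j k) \<and> sbdd ?q (\<Sum>k\<le>m. Y j k)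
     \<and> hdist ?q (\<Sum>k\<le>m. X j k) (\<Sum>k\<le>m. Y j k) \<le> (\<Sum>k\<le>m. hdist ?q (X j k) (Y j k))"
      by (rule hdist_sum[OF q]) (use XY[OF j] in auto)
    moreover have "(\<Sum>k\<le>m. hdist ?q (X j k) (Y j k)) \<le> (\<Sum>k\<le>m. c j k * h j k)"
      by (rule sum_mono) (use XYh[OF j] in auto)
    ultimately show ?thesis by linarith
  qed
  have outer: "(\<Sum>j\<le>n. \<Sum>k\<le>m. X j k) \<noteq> {} \<and> (\<Sum>j\<le>n. \<Sum>k\<le>m. Y j k) \<noteq> {}
     \<and> sbdd ?q (\<Sum>j\<le>n. \<Sum>k\<le>m. X j k) \<and> sbdd ?q (\<Sum>j\<le>n. \<Sum>k\<le>m. Y j k)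
     \<and> hdist ?q (\<Sum>j\<le>n. \<Sum>k\<le>m. X j k) (\<Sum>j\<le>n. \<Sum>k\<le>m. Y j k) \<le> (\<Sum>j\<le>n. \<Sum>k\<le>m. c j k * h j k)"
  proof -
    have "(\<Sum>j\<le>n. \<Sum>k\<le>m. X j k) \<noteq> {} \<and> (\<Sum>j\<le>n. \<Sum>k\<le>m. Y j k) \<noteq> {}
     \<and> sbdd ?q (\<Sum>j\<le>n. \<Sum>k\<le>m. X j k) \<and> sbdd ?q (\<Sum>j\<le>n. \<Sum>k\<le>m. Y j k)
     \<and> hdist ?q (\<Sum>j\<le>n. \<Sum>k\<le>m. X j k) (\<Sum>j\<le>n. \<Sum>k\<le>m. Y j k)
        \<le> (\<Sum>j\<le>n. hdist ?q (\<Sum>k\<le>m. X j k) (\<Sum>k\<le>m. Y j k))"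
      by (rule hdist_sum[OF q]) (use inner in auto)
    moreover have "(\<Sum>j\<le>n. hdist ?q (\<Sum>k\<le>m. X j k) (\<Sum>k\<le>m. Y j k)) \<le> (\<Sum>j\<le>n. \<Sum>k\<le>m. c j k * h j k)"
      by (rule sum_mono) (use inner in auto)
    ultimately show ?thesis by linarith
  qed
  define g where "g t = (\<Sum>j\<le>n. \<Sum>k\<le>m. indicator (eA L j \<inter> eA L' k \<inter> E) t * h j k)" for t
  have gi: "integrable M01 g" unfolding g_def
  proof (intro Bochner_Integration.integrable_sum)
    fix j k assume "j \<in> {..n}" "k \<in> {..m}"
    then have s: "eA L j \<inter> eA L' k \<inter> E \<in> sets M01" using setsX by auto
    show "integrable M01 (\<lambda>t. indicator (eA L j \<inter> eA L' k \<inter> E) t * h j k)"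
      using integrable_indicator[OF s M01_emeasure_fin, of "h j k"] by simp
  qed
  have gint: "integral\<^sup>L M01 g = (\<Sum>j\<le>n. \<Sum>k\<le>m. c j k * h j k)"
  proof -
    have "integral\<^sup>L M01 g = (\<Sum>j\<le>n. \<Sum>k\<le>m. (\<integral>t. indicator (eA L j \<inter> eA L' k \<inter> E) t * h j k \<partial>M01))"
      unfolding g_def
    proof (subst Bochner_Integration.integral_sum)
      show "\<And>j. j \<in> {..n} \<Longrightarrow> integrable M01 (\<lambda>t. \<Sum>k\<le>m. indicator (eA L j \<inter> eA L' k \<inter> E) t * h j k)"
      proof (intro Bochner_Integration.integrable_sum)
        fix j k assume "j \<in> {..n}" "k \<in> {..m}"
        then have s: "eA L j \<inter> eA L' k \<inter> E \<in> sets M01" using setsX by auto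
        show "integrable M01 (\<lambda>t. indicator (eA L j \<inter> eA L' k \<inter> E) t * h j k)"
          using integrable_indicator[OF s M01_emeasure_fin, of "h j k"] by simp
      qed
      show "(\<Sum>j\<le>n. \<integral>t. (\<Sum>k\<le>m. indicator (eA L j \<inter> eA L' k \<inter> E) t * h j k) \<partial>M01) =
          (\<Sum>j\<le>n. \<Sum>k\<le>m. \<integral>t. indicator (eA L j \<inter> eA L' k \<inter> E) t * h j k \<partial>M01)"
      proof (rule sum.cong[OF refl], rule Bochner_Integration.integral_sum)
        fix j k assume "j \<in> {..n}" "k \<in> {..m}"
        then have s: "eA L j \<inter> eA L' k \<inter> E \<in> sets M01" using setsX by auto
        show "integrable M01 (\<lambda>t. indicator (eA L j \<inter> eA L' k \<inter> E) t * h j k)"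
          using integrable_indicator[OF s M01_emeasure_fin, of "h j k"] by simp
      qed
    qed
    also have "\<dots> = (\<Sum>j\<le>n. \<Sum>k\<le>m. c j k * h j k)"
    proof (intro sum.cong refl)
      fix j k assume "j \<in> {..n}" "k \<in> {..m}"
      then have s: "eA L j \<inter> eA L' k \<inter> E \<in> sets M01" using setsX by auto
      then have "eA L j \<inter> eA L' k \<inter> E \<inter> space M01 = eA L j \<inter> eA L' k \<inter> E"
        using sets.sets_into_space by blast
      then show "(\<integral>t. indicator (eA L j \<inter> eA L' k \<inter> E) t * h j k \<partial>M01) = c j k * h j k"
        by (simp add: c_def)
    qed
    finally show ?thesis .
  qed
  define f where "f t = indicator E t * hdist ?q (simple_val p L t) (simple_val p L' t)" for t
  have fg: "f t = g t" if t: "t \<in> space M01" for t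
  proof (cases "t \<in> E")
    case False
    then show ?thesis by (simp add: f_def g_def)
  next
    case True
    have t01: "t \<in> {0..1}" using t by simp
    obtain j0 where j0: "j0 \<le> length L" "t \<in> eA L j0" using eA_cover[OF fs t01] by blast
    obtain k0 where k0: "k0 \<le> length L'" "t \<in> eA L' k0" using eA_cover[OF fs t01] by blast
    have mem: "t \<in> eA L j \<inter> eA L' k \<inter> E \<longleftrightarrow> (j = j0 \<and> k = k0)"
      if "j \<le> n" "k \<le> m" for j k
    proof
      assume a: "t \<in> eA L j \<inter> eA L' k \<inter> E"
      have "j = j0"
      proof (rule ccontr)
        assume "j \<noteq> j0"
        then have "eA L j \<inter> eA L j0 = {}" using eA_disj[OF fs L _ j0(1)] that(1) by (simp add: n_def)
        then show False using a j0(2) by blast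
      qed
      moreover have "k = k0"
      proof (rule ccontr)
        assume "k \<noteq> k0"
        then have "eA L' k \<inter> eA L' k0 = {}" using eA_disj[OF fs L' _ k0(1)] that(2) by (simp add: m_def)
        then show False using a k0(2) by blast
      qed
      ultimately show "j = j0 \<and> k = k0" by simp
    next
      assume "j = j0 \<and> k = k0"
      then show "t \<in> eA L j \<inter> eA L' k \<inter> E" using j0(2) k0(2) True by simp
    qed
    have "g t = (\<Sum>j\<le>n. \<Sum>k\<le>m. (if j = j0 then (if k = k0 then h j k else 0) else 0))"
      unfolding g_def
    proof (intro sum.cong refl)
      fix j k assume "j \<in> {..n}" "k \<in> {..m}"
      then have "t \<in> eA L j \<inter> eA L' k \<inter> E \<longleftrightarrow> (j = j0 \<and> k = k0)" using mem by simp
      then show "indicator (eA L j \<inter> eA L' k \<inter> E) t * h j k = (if j = j0 then (if k = k0 then h j k else 0) else 0)"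
        unfolding indicator_def by auto
    qed
    also have "\<dots> = (\<Sum>j\<le>n. (if j = j0 then h j k0 else 0))"
    proof (rule sum.cong[OF refl])
      fix j assume "j \<in> {..n}"
      have "(\<Sum>k\<le>m. (if k = k0 then h j k else 0)) = h j k0"
        using k0(1) by (simp add: m_def)
      then show "(\<Sum>k\<le>m. (if j = j0 then (if k = k0 then h j k else 0) else 0)) = (if j = j0 then h j k0 else 0)"
        by simp
    qed
    also have "\<dots> = h j0 k0" using j0(1) by (simp add: n_def)
    also have "\<dots> = f t"
      using sv_eA[OF fs L j0] sv_eA[OF fs L' k0] True by (simp add: f_def h_def)
    finally show ?thesis by simp
  qed
  have "integrable M01 f \<longleftrightarrow> integrable M01 g"
    by (rule Bochner_Integration.integrable_cong) (auto simp: fg)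
  then have fi: "integrable M01 f" using gi by simp
  have fint: "integral\<^sup>L M01 f = integral\<^sup>L M01 g" using fg by (intro Bochner_Integration.integral_cong) auto
  show "integrable M01 (\<lambda>t. indicator E t * hdist (p i) (simple_val p L t) (simple_val p L' t))"
    using fi unfolding f_def[abs_def] .
  have SI: "simple_int p L E \<noteq> {}" "sbdd ?q (simple_int p L E)" "sint_plain L E \<noteq> {}" "sbdd ?q (sint_plain L E)"
    "hdist ?q (simple_int p L E) (sint_plain L E) \<le> 0"
    using sint[OF fs L, where E=E] by auto
  have SI': "simple_int p L' E \<noteq> {}" "sbdd ?q (simple_int p L' E)" "sint_plain L' E \<noteq> {}" "sbdd ?q (sint_plain L' E)"
    "hdist ?q (simple_int p L' E) (sint_plain L' E) \<le> 0"
    using sint[OF fs L', where E=E] by auto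
  have "hdist ?q (simple_int p L E) (simple_int p L' E)
      \<le> hdist ?q (simple_int p L E) (sint_plain L E) + hdist ?q (sint_plain L E) (simple_int p L' E)"
    by (rule hd_tri[OF q SI(1) SI(3) SI'(1) SI(2) SI(4) SI'(2)])
  also have "hdist ?q (sint_plain L E) (simple_int p L' E)
      \<le> hdist ?q (sint_plain L E) (sint_plain L' E) + hdist ?q (sint_plain L' E) (simple_int p L' E)"
    by (rule hd_tri[OF q SI(3) SI'(3) SI'(1) SI(4) SI'(4) SI'(2)])
  also have "hdist ?q (sint_plain L' E) (simple_int p L' E) \<le> 0" using SI'(5) hd_sym[OF q] by metis
  also have "hdist ?q (sint_plain L E) (sint_plain L' E) \<le> (\<Sum>j\<le>n. \<Sum>k\<le>m. c j k * h j k)"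
    using outer PL PL' by simp
  finally have "hdist ?q (simple_int p L E) (simple_int p L' E) \<le> integral\<^sup>L M01 f"
    using SI(5) gint fint by linarith
  then show "hdist (p i) (simple_int p L E) (simple_int p L' E)
       \<le> (\<integral>t. indicator E t * hdist (p i) (simple_val p L t) (simple_val p L' t) \<partial>M01)"
    unfolding f_def[abs_def] .
qed

end


lemma M01_Omega: "{0..1::real} \<inter> space lebesgue \<in> sets lebesgue"
  using lmeasurable_cbox[of "0::real" 1] by (simp add: cbox_interval fmeasurableD)

lemma M01_AE_meas:
  fixes f g :: "real \<Rightarrow> real"
  assumes f: "f \<in> borel_measurable M01" and ae: "AE t in M01. f t = g t"
  shows "g \<in> borel_measurable M01"
proof -
  have f': "(\<lambda>x. indicator {0..1} x *\<^sub>R f x) \<in> borel_measurable lebesgue"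
    using f borel_measurable_restrict_space_iff[OF M01_Omega] by blast
  have "AE x in lebesgue. x \<in> {0..1} \<longrightarrow> f x = g x"
    using AE_restrict_space_iff[OF M01_Omega, THEN iffD1, OF ae] .
  then have "AE x in lebesgue. indicator {0..1} x *\<^sub>R f x = indicator {0..1} x *\<^sub>R g x"
    by eventually_elim (auto simp: indicator_def)
  then have "(\<lambda>x. indicator {0..1} x *\<^sub>R g x) \<in> borel_measurable lebesgue"
    by (rule borel_measurable_AE[OF f'])
  then show ?thesis using borel_measurable_restrict_space_iff[OF M01_Omega] by blast
qed

lemma ind_int:
  fixes f :: "real \<Rightarrow> real"
  assumes "E \<in> sets M01" "integrable M01 f"
  shows "integrable M01 (\<lambda>t. indicator E t * f t)"
  using integrable_real_mult_indicator[OF assms] by (simp add: mult.commute)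

lemma ind_le:
  fixes f :: "real \<Rightarrow> real"
  assumes E: "E \<in> sets M01" and f: "integrable M01 f" and nn: "\<And>t. t \<in> {0..1} \<Longrightarrow> 0 \<le> f t"
  shows "0 \<le> (\<integral>t. indicator E t * f t \<partial>M01)" "(\<integral>t. indicator E t * f t \<partial>M01) \<le> integral\<^sup>L M01 f"
proof -
  show "0 \<le> (\<integral>t. indicator E t * f t \<partial>M01)"
    by (rule integral_nonneg_AE) (use nn in \<open>auto simp: indicator_def\<close>)
  show "(\<integral>t. indicator E t * f t \<partial>M01) \<le> integral\<^sup>L M01 f"
    by (rule integral_mono[OF ind_int[OF E f] f]) (use nn in \<open>auto simp: indicator_def\<close>)
qed

lemma LINT_M01:
  fixes f :: "real \<Rightarrow> real"
  assumes E: "E \<in> sets M01"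
  shows "(LINT t:E|lebesgue. f t) = (\<integral>t. indicator E t * f t \<partial>M01)"
proof -
  have sub: "E \<subseteq> {0..1}" using E M01_sets by blast
  have "(\<integral>t. indicator E t * f t \<partial>M01) = (\<integral>t. indicator {0..1} t *\<^sub>R (indicator E t * f t) \<partial>lebesgue)"
    by (rule integral_restrict_space[OF M01_Omega])
  also have "\<dots> = (\<integral>t. indicator E t *\<^sub>R f t \<partial>lebesgue)"
    by (rule Bochner_Integration.integral_cong[OF refl]) (use sub in \<open>auto simp: indicator_def\<close>)
  finally show ?thesis by (simp add: set_lebesgue_integral_def)
qed

lemma fatou_real:
  fixes h :: "nat \<Rightarrow> real \<Rightarrow> real" and F :: "real \<Rightarrow> real"
  assumes hi: "\<And>m. integrable M01 (h m)"
    and hn: "\<And>m t. t \<in> {0..1} \<Longrightarrow> 0 \<le> h m t"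
    and conv: "AE t in M01. (\<lambda>m. h m t) \<longlonglongrightarrow> F t"
    and bnd: "\<And>m. m \<ge> N \<Longrightarrow> integral\<^sup>L M01 (h m) \<le> B"
  shows "integrable M01 F" "integral\<^sup>L M01 F \<le> B"
proof -
  have hm: "h m \<in> borel_measurable M01" for m using hi by blast
  have Gm: "(\<lambda>t. lim (\<lambda>m. h m t)) \<in> borel_measurable M01"
    by (rule borel_measurable_lim_metric[OF hm])
  have "AE t in M01. lim (\<lambda>m. h m t) = F t"
    using conv by eventually_elim (rule limI)
  then have Fm: "F \<in> borel_measurable M01" by (rule M01_AE_meas[OF Gm])
  have sp: "AE t in M01. t \<in> {0..1}" by (rule AE_I2) simp
  have Fnn: "AE t in M01. 0 \<le> F t"
    using conv sp
  proof eventually_elim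
    case (elim t)
    then show ?case
      by (intro LIMSEQ_le_const[OF elim(1)]) (use elim(2) hn in auto)
  qed
  have liminf_eq: "AE t in M01. liminf (\<lambda>m. ennreal (h m t)) = ennreal (F t)"
    using conv
  proof eventually_elim
    case (elim t)
    have "(\<lambda>m. ennreal (h m t)) \<longlonglongrightarrow> ennreal (F t)" by (rule tendsto_ennrealI[OF elim])
    then show ?case by (rule lim_imp_Liminf[OF sequentially_bot])
  qed
  have "(\<integral>\<^sup>+t. ennreal (F t) \<partial>M01) = (\<integral>\<^sup>+t. liminf (\<lambda>m. ennreal (h m t)) \<partial>M01)"
    by (rule nn_integral_cong_AE) (use liminf_eq in \<open>eventually_elim, simp\<close>)
  also have "\<dots> \<le> liminf (\<lambda>m. (\<integral>\<^sup>+t. ennreal (h m t) \<partial>M01))"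
    by (rule nn_integral_liminf) (use hm in measurable)
  also have "\<dots> \<le> limsup (\<lambda>m. (\<integral>\<^sup>+t. ennreal (h m t) \<partial>M01))"
    by (rule Liminf_le_Limsup[OF sequentially_bot])
  also have "\<dots> \<le> ennreal B"
  proof (rule Limsup_bounded)
    show "\<forall>\<^sub>F m in sequentially. (\<integral>\<^sup>+t. ennreal (h m t) \<partial>M01) \<le> ennreal B"
      unfolding eventually_sequentially
    proof (intro exI[of _ N] allI impI)
      fix m assume m: "N \<le> m"
      have "(\<integral>\<^sup>+t. ennreal (h m t) \<partial>M01) = ennreal (integral\<^sup>L M01 (h m))"
        by (rule nn_integral_eq_integral[OF hi]) (use sp in \<open>eventually_elim, use hn in auto\<close>)
      then show "(\<integral>\<^sup>+t. ennreal (h m t) \<partial>M01) \<le> ennreal B" using bnd[OF m] by (simp add: ennreal_leI)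
    qed
  qed
  finally have le: "(\<integral>\<^sup>+t. ennreal (F t) \<partial>M01) \<le> ennreal B" .
  show Fi: "integrable M01 F"
    by (rule integrableI_nonneg[OF Fm Fnn]) (use le in \<open>auto simp: top_unique less_top[symmetric] intro: le_less_trans\<close>)
  have B0: "0 \<le> B"
  proof -
    have "0 \<le> integral\<^sup>L M01 (h N)"
      by (rule integral_nonneg_AE) (use sp in \<open>eventually_elim, use hn in auto\<close>)
    then show ?thesis using bnd[of N] by simp
  qed
  have "integral\<^sup>L M01 F = enn2real (\<integral>\<^sup>+t. ennreal (F t) \<partial>M01)"
    by (rule integral_eq_nn_integral[OF Fm Fnn])
  also have "\<dots> \<le> B" using le B0 by (simp add: enn2real_leI)
  finally show "integral\<^sup>L M01 F \<le> B" .
qed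


context
  fixes p :: "nat \<Rightarrow> 'a::real_vector \<Rightarrow> real" and \<Gamma> :: "real \<Rightarrow> 'a set"
  assumes fs: "frechet_seminorms p" and G: "\<forall>t\<in>{0..1}. \<Gamma> t \<in> ck p"
begin

lemma Gp: "t \<in> {0..1} \<Longrightarrow> \<Gamma> t \<noteq> {}" "t \<in> {0..1} \<Longrightarrow> sbdd (p i) (\<Gamma> t)"
  using G ck_props[OF fs] by auto

lemma hsv_int:
  assumes L: "simple_rep p L" and L': "simple_rep p L'"
  shows "integrable M01 (\<lambda>t. hdist (p i) (simple_val p L t) (simple_val p L' t))"
proof -
  have "integrable M01 (\<lambda>t. indicator {0..1} t * hdist (p i) (simple_val p L t) (simple_val p L' t))"
    using int_le(1)[OF fs L L', of "{0..1}" i] by simp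
  moreover have "integrable M01 (\<lambda>t. indicator {0..1} t * hdist (p i) (simple_val p L t) (simple_val p L' t))
     \<longleftrightarrow> integrable M01 (\<lambda>t. hdist (p i) (simple_val p L t) (simple_val p L' t))"
    by (rule Bochner_Integration.integrable_cong) auto
  ultimately show ?thesis by simp
qed

lemma tri_svG:
  assumes L: "simple_rep p L" and L': "simple_rep p L'" and t: "t \<in> {0..1}"
  shows "hdist (p i) (simple_val p L t) (simple_val p L' t)
           \<le> hdist (p i) (simple_val p L t) (\<Gamma> t) + hdist (p i) (simple_val p L' t) (\<Gamma> t)"
    "hdist (p i) (simple_val p L t) (\<Gamma> t)
           \<le> hdist (p i) (simple_val p L t) (simple_val p L' t) + hdist (p i) (simple_val p L' t) (\<Gamma> t)"
    "0 \<le> hdist (p i) (simple_val p L t) (\<Gamma> t)"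
    "0 \<le> hdist (p i) (simple_val p L t) (simple_val p L' t)"
proof -
  note q = fsn[OF fs, of i]
  note S = sval_props[OF fs L, where t=t] and T = sval_props[OF fs L', where t=t]
  have "hdist (p i) (simple_val p L t) (simple_val p L' t)
           \<le> hdist (p i) (simple_val p L t) (\<Gamma> t) + hdist (p i) (\<Gamma> t) (simple_val p L' t)"
    by (rule hd_tri[OF q S(1) Gp(1)[OF t] T(1) S(3) Gp(2)[OF t] T(3)])
  then show "hdist (p i) (simple_val p L t) (simple_val p L' t)
           \<le> hdist (p i) (simple_val p L t) (\<Gamma> t) + hdist (p i) (simple_val p L' t) (\<Gamma> t)"
    using hd_sym[OF q] by metis
  show "hdist (p i) (simple_val p L t) (\<Gamma> t)
           \<le> hdist (p i) (simple_val p L t) (simple_val p L' t) + hdist (p i) (simple_val p L' t) (\<Gamma> t)"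
    by (rule hd_tri[OF q S(1) T(1) Gp(1)[OF t] S(3) T(3) Gp(2)[OF t]])
  show "0 \<le> hdist (p i) (simple_val p L t) (\<Gamma> t)"
    by (rule hd_nonneg[OF q S(1) Gp(1)[OF t] S(3) Gp(2)[OF t]])
  show "0 \<le> hdist (p i) (simple_val p L t) (simple_val p L' t)"
    by (rule hd_nonneg[OF q S(1) T(1) S(3) T(3)])
qed

lemma int_tri:
  assumes L: "simple_rep p L" and L': "simple_rep p L'" and E: "E \<in> sets M01"
    and iL: "integrable M01 (\<lambda>t. hdist (p i) (simple_val p L t) (\<Gamma> t))"
    and iL': "integrable M01 (\<lambda>t. hdist (p i) (simple_val p L' t) (\<Gamma> t))"
  shows "hdist (p i) (simple_int p L E) (simple_int p L' E)
     \<le> (\<integral>t. indicator E t * hdist (p i) (simple_val p L t) (\<Gamma> t) \<partial>M01)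
       + (\<integral>t. indicator E t * hdist (p i) (simple_val p L' t) (\<Gamma> t) \<partial>M01)"
proof -
  have "hdist (p i) (simple_int p L E) (simple_int p L' E)
      \<le> (\<integral>t. indicator E t * hdist (p i) (simple_val p L t) (simple_val p L' t) \<partial>M01)"
    by (rule int_le(2)[OF fs L L' E])
  also have "\<dots> \<le> (\<integral>t. indicator E t * hdist (p i) (simple_val p L t) (\<Gamma> t)
                    + indicator E t * hdist (p i) (simple_val p L' t) (\<Gamma> t) \<partial>M01)"
  proof (rule integral_mono)
    show "integrable M01 (\<lambda>t. indicator E t * hdist (p i) (simple_val p L t) (simple_val p L' t))"
      by (rule int_le(1)[OF fs L L' E])
    show "integrable M01 (\<lambda>t. indicator E t * hdist (p i) (simple_val p L t) (\<Gamma> t)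
                    + indicator E t * hdist (p i) (simple_val p L' t) (\<Gamma> t))"
      using ind_int[OF E iL] ind_int[OF E iL'] by simp
    fix t assume "t \<in> space M01"
    then have t: "t \<in> {0..1}" by simp
    show "indicator E t * hdist (p i) (simple_val p L t) (simple_val p L' t)
        \<le> indicator E t * hdist (p i) (simple_val p L t) (\<Gamma> t) + indicator E t * hdist (p i) (simple_val p L' t) (\<Gamma> t)"
      using tri_svG(1)[OF L L' t, of i] by (auto simp: indicator_def)
  qed
  also have "\<dots> = (\<integral>t. indicator E t * hdist (p i) (simple_val p L t) (\<Gamma> t) \<partial>M01)
       + (\<integral>t. indicator E t * hdist (p i) (simple_val p L' t) (\<Gamma> t) \<partial>M01)"
    by (rule Bochner_Integration.integral_add[OF ind_int[OF E iL] ind_int[OF E iL']])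
  finally show ?thesis .
qed

end


context
  fixes p :: "nat \<Rightarrow> 'a::real_vector \<Rightarrow> real" and \<Gamma> :: "real \<Rightarrow> 'a set"
  assumes fs: "frechet_seminorms p" and G: "\<forall>t\<in>{0..1}. \<Gamma> t \<in> ck p"
begin

lemma core_L1:
  assumes S: "int_seq p \<Gamma> L"
  shows "\<And>n. integrable M01 (\<lambda>t. hdist (p i) (simple_val p (L n) t) (\<Gamma> t))"
    "(\<lambda>n. integral\<^sup>L M01 (\<lambda>t. hdist (p i) (simple_val p (L n) t) (\<Gamma> t))) \<longlonglongrightarrow> 0"
proof -
  define F where "F n t = hdist (p i) (simple_val p (L n) t) (\<Gamma> t)" for n t
  define h where "h n m t = hdist (p i) (simple_val p (L n) t) (simple_val p (L m) t)" for n m t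
  have rep: "simple_rep p (L n)" for n using S by (simp add: int_seq_def)
  have aeF: "AE t in M01. (\<lambda>m. F m t) \<longlonglongrightarrow> 0"
    using S by (simp add: int_seq_def F_def hausd_hd)
  have cauchy: "\<exists>N. \<forall>m\<ge>N. \<forall>n\<ge>N. integral\<^sup>L M01 (h n m) < e" if "e > 0" for e
    using S that by (simp add: int_seq_def h_def[abs_def] hausd_hd)
  have hi: "integrable M01 (h n m)" for n m
    unfolding h_def[abs_def] by (rule hsv_int[OF fs G rep rep])
  have hnn: "t \<in> {0..1} \<Longrightarrow> 0 \<le> h n m t" for n m t
    unfolding h_def using tri_svG(4)[OF fs G rep rep] by blast
  have Fnn: "t \<in> {0..1} \<Longrightarrow> 0 \<le> F n t" for n t
    unfolding F_def using tri_svG(3)[OF fs G rep rep] by blast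
  have t1: "t \<in> {0..1} \<Longrightarrow> h n m t \<le> F n t + F m t" for n m t
    unfolding h_def F_def using tri_svG(1)[OF fs G rep rep] by blast
  have t2: "t \<in> {0..1} \<Longrightarrow> F n t \<le> h n m t + F m t" for n m t
    unfolding h_def F_def using tri_svG(2)[OF fs G rep rep] by blast
  have hh: "t \<in> {0..1} \<Longrightarrow> h n m t \<le> h n k t + h k m t" for n m k t
  proof -
    assume t: "t \<in> {0..1}"
    note q = fsn[OF fs, of i]
    note A = sval_props[OF fs rep, where t=t]
    show ?thesis unfolding h_def
      by (rule hd_tri[OF q A(1) A(1) A(1) A(3) A(3) A(3)])
  qed
  have sp: "AE t in M01. t \<in> {0..1}" by (rule AE_I2) simp
  have conv: "AE t in M01. (\<lambda>m. h n m t) \<longlonglongrightarrow> F n t" for n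
    using aeF sp
  proof eventually_elim
    case (elim t)
    show ?case
    proof (rule tendsto_sandwich[where f="\<lambda>m. F n t - F m t" and h="\<lambda>m. F n t + F m t"])
      show "\<forall>\<^sub>F m in sequentially. F n t - F m t \<le> h n m t" using t2[OF elim(2), of n] by (simp add: algebra_simps)
      show "\<forall>\<^sub>F m in sequentially. h n m t \<le> F n t + F m t" using t1[OF elim(2), of n] by simp
      show "(\<lambda>m. F n t - F m t) \<longlonglongrightarrow> F n t" using tendsto_diff[OF tendsto_const elim(1)] by simp
      show "(\<lambda>m. F n t + F m t) \<longlonglongrightarrow> F n t" using tendsto_add[OF tendsto_const elim(1)] by simp
    qed
  qed
  have small: "integrable M01 (F n) \<and> integral\<^sup>L M01 (F n) \<le> e" if e: "e > 0" and n: "n \<ge> N"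
    and N: "\<forall>m\<ge>N. \<forall>n\<ge>N. integral\<^sup>L M01 (h n m) < e" for e n N
  proof -
    have b: "\<And>m. m \<ge> N \<Longrightarrow> integral\<^sup>L M01 (h n m) \<le> e" using N n by (simp add: less_imp_le)
    show ?thesis using fatou_real[OF hi hnn conv[of n] b] by blast
  qed
  obtain N1 where N1: "\<forall>m\<ge>N1. \<forall>n\<ge>N1. integral\<^sup>L M01 (h n m) < 1" using cauchy[of 1] by auto
  have allint: "integrable M01 (F n)" for n
  proof -
    have b: "integral\<^sup>L M01 (h n m) \<le> integral\<^sup>L M01 (h n N1) + 1" if m: "m \<ge> N1" for m
    proof -
      have "integral\<^sup>L M01 (h n m) \<le> integral\<^sup>L M01 (\<lambda>t. h n N1 t + h N1 m t)"
        by (rule integral_mono) (use hi hh in auto)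
      also have "\<dots> = integral\<^sup>L M01 (h n N1) + integral\<^sup>L M01 (h N1 m)"
        by (rule Bochner_Integration.integral_add[OF hi hi])
      also have "integral\<^sup>L M01 (h N1 m) \<le> 1" using N1 m by (simp add: less_imp_le)
      finally show ?thesis by simp
    qed
    show ?thesis using fatou_real[OF hi hnn conv[of n] b] by blast
  qed
  then show "\<And>n. integrable M01 (\<lambda>t. hdist (p i) (simple_val p (L n) t) (\<Gamma> t))"
    unfolding F_def[abs_def] by blast
  have "(\<lambda>n. integral\<^sup>L M01 (F n)) \<longlonglongrightarrow> 0"
  proof (rule LIMSEQ_I)
    fix r :: real assume r: "r > 0"
    obtain N where N: "\<forall>m\<ge>N. \<forall>n\<ge>N. integral\<^sup>L M01 (h n m) < r / 2" using cauchy[of "r/2"] r by auto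
    show "\<exists>no. \<forall>n\<ge>no. norm (integral\<^sup>L M01 (F n) - 0) < r"
    proof (intro exI allI impI)
      fix n assume n: "n \<ge> N"
      have "integral\<^sup>L M01 (F n) \<le> r / 2" using small[of "r/2" N n] r n N by auto
      moreover have "0 \<le> integral\<^sup>L M01 (F n)"
        by (rule integral_nonneg_AE) (use sp in \<open>eventually_elim, use Fnn in auto\<close>)
      ultimately show "norm (integral\<^sup>L M01 (F n) - 0) < r" using r by simp
    qed
  qed
  then show "(\<lambda>n. integral\<^sup>L M01 (\<lambda>t. hdist (p i) (simple_val p (L n) t) (\<Gamma> t))) \<longlonglongrightarrow> 0"
    unfolding F_def[abs_def] by simp
qed

end


lemma le_of_lim:
  fixes a c :: real
  assumes "\<And>n. a \<le> c + X n" "X \<longlonglongrightarrow> 0"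
  shows "a \<le> c"
proof -
  have "a \<le> c + 0"
    by (rule LIMSEQ_le_const[OF tendsto_add[OF tendsto_const assms(2)]]) (use assms(1) in auto)
  then show ?thesis by simp
qed

lemma squeeze0:
  fixes X Y :: "nat \<Rightarrow> real"
  assumes "\<And>n. 0 \<le> X n" "\<And>n. X n \<le> Y n" "Y \<longlonglongrightarrow> 0"
  shows "X \<longlonglongrightarrow> 0"
  by (rule tendsto_sandwich[where f="\<lambda>_. 0" and h=Y]) (use assms in auto)

context
  fixes p :: "nat \<Rightarrow> 'a::real_vector \<Rightarrow> real"
  assumes fs: "frechet_seminorms p"
begin

lemma lim_unique:
  assumes S: "\<And>n. S n \<noteq> {}" "\<And>n i. sbdd (p i) (S n)"
    and x: "x \<in> ck p" and y: "y \<in> ck p"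
    and cx: "\<And>i. (\<lambda>n. hdist (p i) (S n) x) \<longlonglongrightarrow> 0"
    and cy: "\<And>i. (\<lambda>n. hdist (p i) (S n) y) \<longlonglongrightarrow> 0"
  shows "x = y"
proof (rule eq_of_hdist[OF fs])
  note X = ck_props[OF fs x] and Y = ck_props[OF fs y]
  show "x \<noteq> {}" "sn_closed p x" "\<And>i. sbdd (p i) x" "y \<noteq> {}" "sn_closed p y" "\<And>i. sbdd (p i) y"
    using X Y by auto
  fix i
  note q = fsn[OF fs, of i]
  have "hdist (p i) x y \<le> 0 + (hdist (p i) (S n) x + hdist (p i) (S n) y)" for n
  proof -
    have "hdist (p i) x y \<le> hdist (p i) x (S n) + hdist (p i) (S n) y"
      by (rule hd_tri[OF q X(1) S(1) Y(1) X(3) S(2) Y(3)])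
    then show ?thesis using hd_sym[OF q, of x "S n"] by simp
  qed
  then show "hdist (p i) x y \<le> 0"
    by (rule le_of_lim) (use tendsto_add[OF cx cy] in simp)
qed

end

context
  fixes p :: "nat \<Rightarrow> 'a::real_vector \<Rightarrow> real" and \<Gamma> :: "real \<Rightarrow> 'a set"
  assumes fs: "frechet_seminorms p" and G: "\<forall>t\<in>{0..1}. \<Gamma> t \<in> ck p"
begin

lemma dirA:
  assumes "integrable_mf p \<Gamma>"
  shows "p_integrable_mf p \<Gamma>"
proof -
  obtain L where S: "int_seq p \<Gamma> L"
    and lim: "\<forall>E\<in>sets M01. \<exists>x\<in>ck p. \<forall>i. (\<lambda>n. hausd p i (simple_int p (L n) E) x) \<longlonglongrightarrow> 0"
    using assms by (auto simp: integrable_mf_def)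
  have rep: "simple_rep p (L n)" for n using S by (simp add: int_seq_def)
  have ckv: "\<forall>t\<in>{0..1}. simple_val p (L n) t \<in> ck p" for n using S by (simp add: int_seq_def)
  define F where "F i n t = hdist (p i) (simple_val p (L n) t) (\<Gamma> t)" for i n t
  have Fi: "integrable M01 (F i n)" for i n
    unfolding F_def[abs_def] by (rule core_L1(1)[OF fs G S])
  have Fl: "(\<lambda>n. integral\<^sup>L M01 (F i n)) \<longlonglongrightarrow> 0" for i
    unfolding F_def[abs_def] by (rule core_L1(2)[OF fs G S])
  have Fnn: "t \<in> {0..1} \<Longrightarrow> 0 \<le> F i n t" for i n t
    unfolding F_def using tri_svG(3)[OF fs G rep rep] by blast
  have sp: "AE t in M01. t \<in> {0..1}" by (rule AE_I2) simp
  have mbs: "measurable_by_seminorm p \<Gamma>"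
    using S unfolding measurable_by_seminorm_def int_seq_def by blast
  have pis: "p_int_seq p \<Gamma> (\<lambda>i. L)"
    unfolding p_int_seq_def
  proof (intro conjI[OF mbs] allI)
    fix i
    have c1: "\<forall>n. simple_rep p (L n) \<and> (\<forall>t\<in>{0..1}. simple_val p (L n) t \<in> ck p)" using rep ckv by blast
    have c2: "\<forall>n. integrable M01 (\<lambda>t. hausd p i (simple_val p (L n) t) (\<Gamma> t))"
      using Fi by (simp add: F_def[abs_def] hausd_hd)
    have c3: "\<forall>e>0. (\<lambda>n. measure lebesgue {t\<in>{0..1}. e \<le> hausd p i (simple_val p (L n) t) (\<Gamma> t)}) \<longlonglongrightarrow> 0"
    proof (intro allI impI)
      fix e :: real assume e: "e > 0"
      have "(\<lambda>n. measure lebesgue {t\<in>{0..1}. e \<le> F i n t}) \<longlonglongrightarrow> 0"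
      proof (rule squeeze0)
        fix n
        show "0 \<le> measure lebesgue {t\<in>{0..1}. e \<le> F i n t}" by simp
        have Fm: "F i n \<in> borel_measurable M01" using Fi by blast
        have set: "{t\<in>space M01. e \<le> F i n t} \<in> sets M01" using Fm by measurable
        have "measure lebesgue {t\<in>{0..1}. e \<le> F i n t} = measure M01 {t\<in>space M01. e \<le> F i n t}"
          using M01_measure[OF set] by simp
        also have "\<dots> \<le> integral\<^sup>L M01 (F i n) / e"
        proof -
          have AEnn: "AE t in M01. 0 \<le> F i n t" using sp by eventually_elim (use Fnn in auto)
          show ?thesis by (rule integral_Markov_inequality_measure[OF Fi set AEnn e])
        qed
        finally show "measure lebesgue {t\<in>{0..1}. e \<le> F i n t} \<le> integral\<^sup>L M01 (F i n) / e" .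
      next
        show "(\<lambda>n. integral\<^sup>L M01 (F i n) / e) \<longlonglongrightarrow> 0" using tendsto_divide_zero[OF Fl] by blast
      qed
      then show "(\<lambda>n. measure lebesgue {t\<in>{0..1}. e \<le> hausd p i (simple_val p (L n) t) (\<Gamma> t)}) \<longlonglongrightarrow> 0"
        by (simp add: F_def hausd_hd)
    qed
    have c4: "\<forall>E\<in>sets M01. (\<lambda>n. LINT t:E|lebesgue. hausd p i (simple_val p (L n) t) (\<Gamma> t)) \<longlonglongrightarrow> 0"
    proof
      fix E assume E: "E \<in> sets M01"
      have "(\<lambda>n. LINT t:E|lebesgue. F i n t) \<longlonglongrightarrow> 0"
      proof (rule squeeze0)
        fix n
        show "0 \<le> (LINT t:E|lebesgue. F i n t)" "(LINT t:E|lebesgue. F i n t) \<le> integral\<^sup>L M01 (F i n)"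
          unfolding LINT_M01[OF E] using ind_le[OF E Fi Fnn] by auto
      qed (rule Fl)
      then show "(\<lambda>n. LINT t:E|lebesgue. hausd p i (simple_val p (L n) t) (\<Gamma> t)) \<longlonglongrightarrow> 0"
        by (simp add: F_def hausd_hd)
    qed
    show "(\<forall>n. simple_rep p (L n) \<and> (\<forall>t\<in>{0..1}. simple_val p (L n) t \<in> ck p)) \<and>
      (\<forall>n. integrable M01 (\<lambda>t. hausd p i (simple_val p (L n) t) (\<Gamma> t))) \<and>
      (\<forall>e>0. (\<lambda>n. measure lebesgue {t\<in>{0..1}. e \<le> hausd p i (simple_val p (L n) t) (\<Gamma> t)}) \<longlonglongrightarrow> 0) \<and>
      (\<forall>E\<in>sets M01. (\<lambda>n. LINT t:E|lebesgue. hausd p i (simple_val p (L n) t) (\<Gamma> t)) \<longlonglongrightarrow> 0)"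
      using c1 c2 c3 c4 by blast
  qed
  show ?thesis
    unfolding p_integrable_mf_def
  proof (intro exI[of _ "\<lambda>i. L"] conjI pis ballI)
    fix E assume E: "E \<in> sets M01"
    obtain x where x: "x \<in> ck p" "\<forall>i. (\<lambda>n. hausd p i (simple_int p (L n) E) x) \<longlonglongrightarrow> 0"
      using lim E by blast
    show "\<exists>!x. x \<in> ck p \<and> (\<forall>i. (\<lambda>n. hausd p i (simple_int p (L n) E) x) \<longlonglongrightarrow> 0)"
    proof (rule ex1I[of _ x])
      show "x \<in> ck p \<and> (\<forall>i. (\<lambda>n. hausd p i (simple_int p (L n) E) x) \<longlonglongrightarrow> 0)" using x by blast
      fix y assume y: "y \<in> ck p \<and> (\<forall>i. (\<lambda>n. hausd p i (simple_int p (L n) E) y) \<longlonglongrightarrow> 0)"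
      show "y = x"
        by (rule lim_unique[OF fs, of "\<lambda>n. simple_int p (L n) E"])
           (use sint[OF fs rep] y x in \<open>auto simp: hausd_hd\<close>)
    qed
  qed
qed

end


context
  fixes p :: "nat \<Rightarrow> 'a::real_vector \<Rightarrow> real" and \<Gamma> :: "real \<Rightarrow> 'a set"
  assumes fs: "frechet_seminorms p" and G: "\<forall>t\<in>{0..1}. \<Gamma> t \<in> ck p"
begin

lemma int_tri2:
  assumes L: "simple_rep p L" and L': "simple_rep p L'" and E: "E \<in> sets M01"
    and u: "integrable M01 u" and v: "integrable M01 v"
    and ub: "\<And>t. t \<in> {0..1} \<Longrightarrow> hdist (p i) (simple_val p L t) (\<Gamma> t) \<le> u t"
    and vb: "\<And>t. t \<in> {0..1} \<Longrightarrow> hdist (p i) (simple_val p L' t) (\<Gamma> t) \<le> v t"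
  shows "hdist (p i) (simple_int p L E) (simple_int p L' E)
     \<le> (\<integral>t. indicator E t * u t \<partial>M01) + (\<integral>t. indicator E t * v t \<partial>M01)"
proof -
  have "hdist (p i) (simple_int p L E) (simple_int p L' E)
      \<le> (\<integral>t. indicator E t * hdist (p i) (simple_val p L t) (simple_val p L' t) \<partial>M01)"
    by (rule int_le(2)[OF fs L L' E])
  also have "\<dots> \<le> (\<integral>t. indicator E t * u t + indicator E t * v t \<partial>M01)"
  proof (rule integral_mono)
    show "integrable M01 (\<lambda>t. indicator E t * hdist (p i) (simple_val p L t) (simple_val p L' t))"
      by (rule int_le(1)[OF fs L L' E])
    show "integrable M01 (\<lambda>t. indicator E t * u t + indicator E t * v t)"
      using ind_int[OF E u] ind_int[OF E v] by simp
    fix t assume "t \<in> space M01"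
    then have t: "t \<in> {0..1}" by simp
    have "hdist (p i) (simple_val p L t) (simple_val p L' t) \<le> u t + v t"
      using tri_svG(1)[OF fs G L L' t, of i] ub[OF t] vb[OF t] by linarith
    then show "indicator E t * hdist (p i) (simple_val p L t) (simple_val p L' t)
        \<le> indicator E t * u t + indicator E t * v t"
      by (auto simp: indicator_def)
  qed
  also have "\<dots> = (\<integral>t. indicator E t * u t \<partial>M01) + (\<integral>t. indicator E t * v t \<partial>M01)"
    by (rule Bochner_Integration.integral_add[OF ind_int[OF E u] ind_int[OF E v]])
  finally show ?thesis .
qed

lemma dirB:
  assumes "p_integrable_mf p \<Gamma>"
  shows "integrable_mf p \<Gamma>"
proof -
  obtain Ls where P: "p_int_seq p \<Gamma> Ls"
    and U: "\<forall>E\<in>sets M01. \<exists>!x. x \<in> ck p \<and> (\<forall>i. (\<lambda>n. hausd p i (simple_int p (Ls i n) E) x) \<longlonglongrightarrow> 0)"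
    using assms by (auto simp: p_integrable_mf_def)
  have rep: "simple_rep p (Ls i n)" for i n using P by (simp add: p_int_seq_def)
  have ckv: "\<forall>t\<in>{0..1}. simple_val p (Ls i n) t \<in> ck p" for i n using P by (simp add: p_int_seq_def)
  have Ii: "integrable M01 (\<lambda>t. hdist (p i) (simple_val p (Ls i n) t) (\<Gamma> t))" for i n
    using P by (simp add: p_int_seq_def hausd_hd)
  have Ilim: "(\<lambda>n. \<integral>t. indicator E t * hdist (p i) (simple_val p (Ls i n) t) (\<Gamma> t) \<partial>M01) \<longlonglongrightarrow> 0"
    if E: "E \<in> sets M01" for E i
    using P E by (simp add: p_int_seq_def hausd_hd LINT_M01)
  have full: "(\<lambda>n. \<integral>t. hdist (p i) (simple_val p (Ls i n) t) (\<Gamma> t) \<partial>M01) \<longlonglongrightarrow> 0" for i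
  proof -
    have "(\<integral>t. indicator {0..1} t * hdist (p i) (simple_val p (Ls i n) t) (\<Gamma> t) \<partial>M01)
        = (\<integral>t. hdist (p i) (simple_val p (Ls i n) t) (\<Gamma> t) \<partial>M01)" for n
      by (rule Bochner_Integration.integral_cong) auto
    then show ?thesis using Ilim[of "{0..1}" i] by simp
  qed
  have "\<exists>n. (\<integral>t. hdist (p k) (simple_val p (Ls k n) t) (\<Gamma> t) \<partial>M01) < (1/2)^k" for k
  proof -
    obtain N where "\<forall>n\<ge>N. norm ((\<integral>t. hdist (p k) (simple_val p (Ls k n) t) (\<Gamma> t) \<partial>M01) - 0) < (1/2)^k"
      using LIMSEQ_D[OF full[of k], of "(1/2)^k"] by auto
    then show ?thesis by (intro exI[of _ N]) auto
  qed
  then obtain nk where nk: "\<And>k. (\<integral>t. hdist (p k) (simple_val p (Ls k (nk k)) t) (\<Gamma> t) \<partial>M01) < (1/2)^k"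
    by metis
  define Gs where "Gs k = Ls k (nk k)" for k
  define \<phi> where "\<phi> k t = hdist (p k) (simple_val p (Gs k) t) (\<Gamma> t)" for k t
  have grep: "simple_rep p (Gs k)" for k by (simp add: Gs_def rep)
  have gckv: "\<forall>t\<in>{0..1}. simple_val p (Gs k) t \<in> ck p" for k by (simp add: Gs_def ckv)
  have \<phi>i: "integrable M01 (\<phi> k)" for k unfolding \<phi>_def[abs_def] Gs_def by (rule Ii)
  have \<phi>nn: "t \<in> {0..1} \<Longrightarrow> 0 \<le> \<phi> k t" for k t
    unfolding \<phi>_def using tri_svG(3)[OF fs G grep grep] by blast
  have \<phi>int: "integral\<^sup>L M01 (\<phi> k) < (1/2)^k" for k
    using nk[of k] by (simp add: \<phi>_def[abs_def] Gs_def)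
  have mono: "hdist (p i) (simple_val p (Gs k) t) (\<Gamma> t) \<le> \<phi> k t" if "t \<in> {0..1}" "i \<le> k" for i k t
    unfolding \<phi>_def
    by (rule hdist_mono_idx[OF fs sval_props(1)[OF fs grep] Gp(1)[OF fs G that(1)]
          sval_props(3)[OF fs grep] Gp(2)[OF fs G that(1)] that(2)])
  have sp: "AE t in M01. t \<in> {0..1}" by (rule AE_I2) simp
  have \<phi>m[measurable]: "\<phi> k \<in> borel_measurable M01" for k using \<phi>i by blast
  have "(\<integral>\<^sup>+t. (\<Sum>k. ennreal (\<phi> k t)) \<partial>M01) = (\<Sum>k. \<integral>\<^sup>+t. ennreal (\<phi> k t) \<partial>M01)"
    by (rule nn_integral_suminf) measurable
  also have "\<dots> = (\<Sum>k. ennreal (integral\<^sup>L M01 (\<phi> k)))"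
  proof (rule arg_cong[where f=suminf], rule ext)
    fix k
    show "(\<integral>\<^sup>+t. ennreal (\<phi> k t) \<partial>M01) = ennreal (integral\<^sup>L M01 (\<phi> k))"
      by (rule nn_integral_eq_integral[OF \<phi>i]) (use sp in \<open>eventually_elim, use \<phi>nn in auto\<close>)
  qed
  also have "\<dots> \<le> (\<Sum>k. ennreal ((1/2)^k))"
    by (rule suminf_le) (use \<phi>int in \<open>auto intro: ennreal_leI less_imp_le\<close>)
  also have "\<dots> = ennreal (\<Sum>k. (1/2::real)^k)"
    by (rule suminf_ennreal2) auto
  finally have fin: "(\<integral>\<^sup>+t. (\<Sum>k. ennreal (\<phi> k t)) \<partial>M01) \<noteq> \<infinity>"
    by (auto simp: top_unique)
  have "AE t in M01. (\<Sum>k. ennreal (\<phi> k t)) \<noteq> \<infinity>"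
    by (rule nn_integral_PInf_AE[OF _ fin]) measurable
  then have AEconv: "AE t in M01. \<forall>i. (\<lambda>k. hdist (p i) (simple_val p (Gs k) t) (\<Gamma> t)) \<longlonglongrightarrow> 0"
    using sp
  proof eventually_elim
    case (elim t)
    have "summable (\<lambda>k. \<phi> k t)"
      by (rule summable_suminf_not_top) (use elim \<phi>nn in auto)
    then have l: "(\<lambda>k. \<phi> k t) \<longlonglongrightarrow> 0" by (rule summable_LIMSEQ_zero)
    show ?case
    proof
      fix i
      show "(\<lambda>k. hdist (p i) (simple_val p (Gs k) t) (\<Gamma> t)) \<longlonglongrightarrow> 0"
      proof (rule tendsto_sandwich[where f="\<lambda>_. 0" and h="\<lambda>k. \<phi> k t"])
        show "\<forall>\<^sub>F k in sequentially. 0 \<le> hdist (p i) (simple_val p (Gs k) t) (\<Gamma> t)"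
          using tri_svG(3)[OF fs G grep grep elim(2)] by simp
        show "\<forall>\<^sub>F k in sequentially. hdist (p i) (simple_val p (Gs k) t) (\<Gamma> t) \<le> \<phi> k t"
          unfolding eventually_sequentially using mono[OF elim(2)] by blast
      qed (auto intro: l)
    qed
  qed
  have AEi: "AE t in M01. (\<lambda>k. hausd p i (simple_val p (Gs k) t) (\<Gamma> t)) \<longlonglongrightarrow> 0" for i
    using AEconv by eventually_elim (simp add: hausd_hd)
  have tm: "totally_measurable p \<Gamma>"
    unfolding totally_measurable_def using grep AEi by blast
  have cauchy: "\<exists>N. \<forall>m\<ge>N. \<forall>n\<ge>N.
      integral\<^sup>L M01 (\<lambda>t. hausd p i (simple_val p (Gs n) t) (simple_val p (Gs m) t)) < e"
    if e: "e > 0" for i e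
  proof -
    obtain N0 where N0: "(1/2::real)^N0 < e/2" using real_arch_pow_inv[of "e/2" "1/2"] e by auto
    define N where "N = max N0 i"
    have pw: "(1/2::real)^k \<le> (1/2)^N0" if "k \<ge> N" for k
      using that by (intro power_decreasing) (auto simp: N_def)
    show ?thesis
    proof (intro exI[of _ N] allI impI)
      fix m n assume m: "m \<ge> N" and n: "n \<ge> N"
      have "integral\<^sup>L M01 (\<lambda>t. hdist (p i) (simple_val p (Gs n) t) (simple_val p (Gs m) t))
          \<le> integral\<^sup>L M01 (\<lambda>t. \<phi> n t + \<phi> m t)"
      proof (rule integral_mono)
        show "integrable M01 (\<lambda>t. hdist (p i) (simple_val p (Gs n) t) (simple_val p (Gs m) t))"
          by (rule hsv_int[OF fs G grep grep])
        show "integrable M01 (\<lambda>t. \<phi> n t + \<phi> m t)" using \<phi>i by auto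
        fix t assume "t \<in> space M01"
        then have t: "t \<in> {0..1}" by simp
        have "i \<le> n" "i \<le> m" using m n by (auto simp: N_def)
        then show "hdist (p i) (simple_val p (Gs n) t) (simple_val p (Gs m) t) \<le> \<phi> n t + \<phi> m t"
          using tri_svG(1)[OF fs G grep grep t, of i n m] mono[OF t, of i n] mono[OF t, of i m] by linarith
      qed
      also have "\<dots> = integral\<^sup>L M01 (\<phi> n) + integral\<^sup>L M01 (\<phi> m)"
        by (rule Bochner_Integration.integral_add[OF \<phi>i \<phi>i])
      also have "\<dots> < e" using \<phi>int[of n] \<phi>int[of m] pw[OF n] pw[OF m] N0 by linarith
      finally show "integral\<^sup>L M01 (\<lambda>t. hausd p i (simple_val p (Gs n) t) (simple_val p (Gs m) t)) < e"
        by (simp add: hausd_hd)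
    qed
  qed
  have iseq: "int_seq p \<Gamma> Gs"
    unfolding int_seq_def using tm grep gckv AEi cauchy by blast
  have lims: "\<exists>x\<in>ck p. \<forall>i. (\<lambda>k. hausd p i (simple_int p (Gs k) E) x) \<longlonglongrightarrow> 0" if E: "E \<in> sets M01" for E
  proof -
    obtain x where x: "x \<in> ck p" "\<And>i. (\<lambda>n. hdist (p i) (simple_int p (Ls i n) E) x) \<longlonglongrightarrow> 0"
      using U E by (auto simp: hausd_hd)
    note X = ck_props[OF fs x(1)]
    have "(\<lambda>k. hdist (p i) (simple_int p (Gs k) E) x) \<longlonglongrightarrow> 0" for i
    proof -
      note q = fsn[OF fs, of i]
      have bound: "hdist (p i) (simple_int p (Gs k) E) x \<le> (1/2)^k" if k: "k \<ge> i" for k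
      proof -
        have "hdist (p i) (simple_int p (Gs k) E) x \<le> integral\<^sup>L M01 (\<phi> k)
           + ((\<integral>t. indicator E t * hdist (p i) (simple_val p (Ls i n) t) (\<Gamma> t) \<partial>M01)
              + hdist (p i) (simple_int p (Ls i n) E) x)" for n
        proof -
          note A = sint[OF fs grep, where E=E] and B = sint[OF fs rep, where E=E]
          have "hdist (p i) (simple_int p (Gs k) E) x
              \<le> hdist (p i) (simple_int p (Gs k) E) (simple_int p (Ls i n) E) + hdist (p i) (simple_int p (Ls i n) E) x"
            by (rule hd_tri[OF q A(1) B(1) X(1) A(2) B(2) X(3)])
          also have "hdist (p i) (simple_int p (Gs k) E) (simple_int p (Ls i n) E)
              \<le> (\<integral>t. indicator E t * \<phi> k t \<partial>M01)
                + (\<integral>t. indicator E t * hdist (p i) (simple_val p (Ls i n) t) (\<Gamma> t) \<partial>M01)"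
            by (rule int_tri2[OF grep rep E \<phi>i Ii]) (use mono k in auto)
          also have "(\<integral>t. indicator E t * \<phi> k t \<partial>M01) \<le> integral\<^sup>L M01 (\<phi> k)"
            using ind_le(2)[OF E \<phi>i \<phi>nn] by blast
          finally show ?thesis by simp
        qed
        then have "hdist (p i) (simple_int p (Gs k) E) x \<le> integral\<^sup>L M01 (\<phi> k)"
          by (rule le_of_lim) (use tendsto_add[OF Ilim[OF E, of i] x(2)[of i]] in simp)
        then show ?thesis using \<phi>int[of k] by linarith
      qed
      show ?thesis
      proof (rule tendsto_sandwich[where f="\<lambda>_. 0" and h="\<lambda>k. (1/2::real)^k"])
        show "\<forall>\<^sub>F k in sequentially. 0 \<le> hdist (p i) (simple_int p (Gs k) E) x"
          using hd_nonneg[OF q sint(1)[OF fs grep] X(1) sint(2)[OF fs grep] X(3)] by simp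
        show "\<forall>\<^sub>F k in sequentially. hdist (p i) (simple_int p (Gs k) E) x \<le> (1/2)^k"
          unfolding eventually_sequentially using bound by blast
        show "(\<lambda>k. (1/2::real)^k) \<longlonglongrightarrow> 0" by (rule LIMSEQ_power_zero) simp
      qed simp
    qed
    then show ?thesis using x(1) by (auto simp: hausd_hd)
  qed
  show ?thesis unfolding integrable_mf_def using iseq lims by blast
qed

end


context
  fixes p :: "nat \<Rightarrow> 'a::real_vector \<Rightarrow> real" and \<Gamma> :: "real \<Rightarrow> 'a set"
  assumes fs: "frechet_seminorms p" and G: "\<forall>t\<in>{0..1}. \<Gamma> t \<in> ck p"
begin

lemma integrals_eq:
  assumes I: "integral_mf_is p \<Gamma> L I" and J: "p_integral_mf_is p \<Gamma> Ls J" and E: "E \<in> sets M01"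
  shows "I E = J E"
proof -
  have S: "int_seq p \<Gamma> L" and IE: "I E \<in> ck p" and Il: "\<And>i. (\<lambda>n. hdist (p i) (simple_int p (L n) E) (I E)) \<longlonglongrightarrow> 0"
    using I E by (auto simp: integral_mf_is_def hausd_hd)
  have P: "p_int_seq p \<Gamma> Ls" and JE: "J E \<in> ck p" and Jl: "\<And>i. (\<lambda>n. hdist (p i) (simple_int p (Ls i n) E) (J E)) \<longlonglongrightarrow> 0"
    using J E by (auto simp: p_integral_mf_is_def hausd_hd)
  have rep: "simple_rep p (L n)" for n using S by (simp add: int_seq_def)
  have rep': "simple_rep p (Ls i n)" for i n using P by (simp add: p_int_seq_def)
  have Ii: "integrable M01 (\<lambda>t. hdist (p i) (simple_val p (Ls i n) t) (\<Gamma> t))" for i n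
    using P by (simp add: p_int_seq_def hausd_hd)
  have Ilim: "(\<lambda>n. \<integral>t. indicator E t * hdist (p i) (simple_val p (Ls i n) t) (\<Gamma> t) \<partial>M01) \<longlonglongrightarrow> 0" for i
    using P E by (simp add: p_int_seq_def hausd_hd LINT_M01)
  note Fi = core_L1(1)[OF fs G S] and Fl = core_L1(2)[OF fs G S]
  note X = ck_props[OF fs IE] and Y = ck_props[OF fs JE]
  show ?thesis
  proof (rule eq_of_hdist[OF fs])
    show "I E \<noteq> {}" "sn_closed p (I E)" "\<And>i. sbdd (p i) (I E)"
      "J E \<noteq> {}" "sn_closed p (J E)" "\<And>i. sbdd (p i) (J E)" using X Y by auto
    fix i
    note q = fsn[OF fs, of i]
    have "hdist (p i) (I E) (J E) \<le> 0 +
       (hdist (p i) (simple_int p (L n) E) (I E)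
        + ((\<integral>t. hdist (p i) (simple_val p (L n) t) (\<Gamma> t) \<partial>M01)
        + ((\<integral>t. indicator E t * hdist (p i) (simple_val p (Ls i n) t) (\<Gamma> t) \<partial>M01)
        + hdist (p i) (simple_int p (Ls i n) E) (J E))))" for n
    proof -
      note A = sint[OF fs rep, where E=E] and B = sint[OF fs rep', where E=E]
      have "hdist (p i) (I E) (J E) \<le> hdist (p i) (I E) (simple_int p (L n) E) + hdist (p i) (simple_int p (L n) E) (J E)"
        by (rule hd_tri[OF q X(1) A(1) Y(1) X(3) A(2) Y(3)])
      also have "hdist (p i) (I E) (simple_int p (L n) E) = hdist (p i) (simple_int p (L n) E) (I E)"
        by (rule hd_sym[OF q])
      also have "hdist (p i) (simple_int p (L n) E) (J E)
         \<le> hdist (p i) (simple_int p (L n) E) (simple_int p (Ls i n) E) + hdist (p i) (simple_int p (Ls i n) E) (J E)"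
        by (rule hd_tri[OF q A(1) B(1) Y(1) A(2) B(2) Y(3)])
      also have "hdist (p i) (simple_int p (L n) E) (simple_int p (Ls i n) E)
         \<le> (\<integral>t. indicator E t * hdist (p i) (simple_val p (L n) t) (\<Gamma> t) \<partial>M01)
           + (\<integral>t. indicator E t * hdist (p i) (simple_val p (Ls i n) t) (\<Gamma> t) \<partial>M01)"
        by (rule int_tri2[OF fs G rep rep' E Fi Ii]) auto
      also have "(\<integral>t. indicator E t * hdist (p i) (simple_val p (L n) t) (\<Gamma> t) \<partial>M01)
          \<le> (\<integral>t. hdist (p i) (simple_val p (L n) t) (\<Gamma> t) \<partial>M01)"
        by (rule ind_le(2)[OF E Fi]) (use tri_svG(3)[OF fs G rep rep] in blast)
      finally show ?thesis by simp
    qed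
    then show "hdist (p i) (I E) (J E) \<le> 0"
      by (rule le_of_lim) (use tendsto_add[OF Il[of i] tendsto_add[OF Fl[of i] tendsto_add[OF Ilim[of i] Jl[of i]]]] in simp)
  qed
qed

end

theorem proposition4p2:
  fixes p :: "nat \<Rightarrow> 'a::real_vector \<Rightarrow> real"
    and \<Gamma> :: "real \<Rightarrow> 'a set"
  assumes "frechet_seminorms p"
    and "\<forall>t\<in>{0..1}. \<Gamma> t \<in> ck p"
  shows "(integrable_mf p \<Gamma> \<longleftrightarrow> p_integrable_mf p \<Gamma>)
    \<and> (\<forall>L I Ls J E. integral_mf_is p \<Gamma> L I \<longrightarrow> p_integral_mf_is p \<Gamma> Ls J
          \<longrightarrow> E \<in> sets (lebesgue_on {0..1}) \<longrightarrow> I E = J E)"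
  using dirA[OF assms] dirB[OF assms] integrals_eq[OF assms] by blast


end
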